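(* Let $\dot W$ be a space-time white noise on $\mathbf{R}_+\times\mathbf{R}$, let $G(t,x,y)$ be the heat kernel of the Laplacian on $\mathbf{R}$, and set $g(t,x):=\int_0^t\int_{\mathbf{R}}G(t-s,x,y)W(\mathrm{d}y\,\mathrm{d}s)$. Then almost surely there exists a sequence $t_n\to\infty$ such that $$\inf_{h\in[0,1],\ x\in[0,1]}g(t_n+h,x)\to\infty\quad\text{as } n\to\infty.$$
   Context: $g$ is the mild solution of the stochastic heat equation $\partial_tu=\Delta u+\dot W$ on $\mathbf{R}$ with zero initial condition; the stochastic integral is the Walsh integral. *)

theory Defs
  imports "HOL-Probability.Probability"
begin

text \<open>Heat kernel of the Laplacian (equation u_t = u_xx) on the real line.\<close>
definition heat_kernel :: "real \<Rightarrow> real \<Rightarrow> real \<Rightarrow> real" where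
  "heat_kernel t x y = exp (- ((x - y)\<^sup>2) / (4 * t)) / sqrt (4 * pi * t)"

text \<open>Square-integrable deterministic integrands on R_+ x R (points are pairs (s,y): time s, space y).\<close>
definition wn_integrand :: "(real \<times> real \<Rightarrow> real) \<Rightarrow> bool" where
  "wn_integrand f \<longleftrightarrow> f \<in> borel_measurable lborel \<and>
     integrable lborel (\<lambda>z. (f z)\<^sup>2) \<and> (\<forall>s y. s < 0 \<longrightarrow> f (s, y) = 0)"

text \<open>W f is the stochastic (Walsh = Wiener, for deterministic integrands) integral of f
  against a space-time white noise on R_+ x R defined on the probability space M:
  an isonormal Gaussian process on L^2(R_+ x R).\<close>
definition white_noise_integral ::
    "'a measure \<Rightarrow> ((real \<times> real \<Rightarrow> real) \<Rightarrow> 'a \<Rightarrow> real) \<Rightarrow> bool" where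
  "white_noise_integral M W \<longleftrightarrow> prob_space M \<and>
     (\<forall>f. wn_integrand f \<longrightarrow>
        W f \<in> borel_measurable M \<and>
        ((\<integral>z. (f z)\<^sup>2 \<partial>lborel) > 0 \<longrightarrow>
            distributed M lborel (W f)
              (\<lambda>v. ennreal (normal_density 0 (sqrt (\<integral>z. (f z)\<^sup>2 \<partial>lborel)) v))) \<and>
        ((\<integral>z. (f z)\<^sup>2 \<partial>lborel) = 0 \<longrightarrow> (AE \<omega> in M. W f \<omega> = 0))) \<and>
     (\<forall>f g (a::real) (b::real). wn_integrand f \<longrightarrow> wn_integrand g \<longrightarrow>
        (AE \<omega> in M. W (\<lambda>z. a * f z + b * g z) \<omega> = a * W f \<omega> + b * W g \<omega>))"

definition heat_integrand :: "real \<Rightarrow> real \<Rightarrow> real \<times> real \<Rightarrow> real" where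
  "heat_integrand t x = (\<lambda>(s, y). if 0 \<le> s \<and> s < t then heat_kernel (t - s) x y else 0)"

end

theory Submission
  imports Defs
begin

lemma hk_nd: "a > 0 \<Longrightarrow> heat_kernel a x z = normal_density 0 (sqrt (2*a)) (x - z)"
proof -
  assume a: "a > 0"
  have s: "(sqrt (2*a))\<^sup>2 = 2*a" using a by simp
  show ?thesis unfolding normal_density_def s heat_kernel_def
    by (simp add: algebra_simps)
qed

lemma hk_nonneg: "a \<ge> 0 \<Longrightarrow> heat_kernel a x z \<ge> 0"
  by (simp add: heat_kernel_def)

lemma hk_meas[measurable]:
  assumes [measurable]: "f \<in> borel_measurable M" "g \<in> borel_measurable M" "h \<in> borel_measurable M"
  shows "(\<lambda>w. heat_kernel (f w) (g w) (h w)) \<in> borel_measurable M"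
  unfolding heat_kernel_def by measurable

lemma CK:
  assumes a: "a > 0" and b: "b > 0"
  shows "(\<integral>\<^sup>+z. ennreal (heat_kernel a x z * heat_kernel b y z) \<partial>lborel) = ennreal (heat_kernel (a+b) x y)"
proof -
  have "(\<integral>\<^sup>+z. ennreal (heat_kernel a x z * heat_kernel b y z) \<partial>lborel)
     = (\<integral>\<^sup>+z. ennreal (normal_density 0 (sqrt (2*a)) (x - z) * normal_density 0 (sqrt (2*b)) (z - y)) \<partial>lborel)"
    using a b by (simp add: hk_nd normal_density_def power2_commute del: ennreal_mult')
  also have "\<dots> = (\<integral>\<^sup>+w. ennreal (normal_density 0 (sqrt (2*a)) ((x - y) - w) * normal_density 0 (sqrt (2*b)) w) \<partial>lborel)"
    by (subst nn_integral_real_affine[where c=1 and t=y]) (simp_all add: algebra_simps)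
  also have "\<dots> = normal_density 0 (sqrt ((sqrt (2*a))\<^sup>2 + (sqrt (2*b))\<^sup>2)) (x - y)"
    using fun_cong[OF conv_normal_density_zero_mean[of "sqrt (2*a)" "sqrt (2*b)"], of "x-y"] a b
    by simp
  also have "\<dots> = heat_kernel (a+b) x y"
    using a b by (simp add: hk_nd algebra_simps)
  finally show ?thesis .
qed

lemma hi_meas_prod: "heat_integrand t x \<in> borel_measurable (borel \<Otimes>\<^sub>M borel)"
  unfolding heat_integrand_def by measurable

lemma hi_meas[measurable]: "heat_integrand t x \<in> borel_measurable borel"
  using hi_meas_prod by (simp add: borel_prod)

lemma hi_nonneg: "heat_integrand t x w \<ge> 0"
  by (cases w) (auto simp: heat_integrand_def intro!: hk_nonneg)

lemma K2:
  assumes t: "t \<ge> 0" and t': "t' \<ge> 0"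
  shows "(\<integral>\<^sup>+w. ennreal (heat_integrand t x w * heat_integrand t' y w) \<partial>lborel)
       = (\<integral>\<^sup>+s. ennreal (indicator {0..<min t t'} s * heat_kernel (t + t' - 2 * s) x y) \<partial>lborel)"
proof -
  have "(\<integral>\<^sup>+w. ennreal (heat_integrand t x w * heat_integrand t' y w) \<partial>lborel)
      = (\<integral>\<^sup>+w. ennreal (heat_integrand t x w * heat_integrand t' y w) \<partial>(lborel \<Otimes>\<^sub>M lborel))"
    by (simp add: lborel_prod)
  also have "\<dots> = (\<integral>\<^sup>+s. \<integral>\<^sup>+z. ennreal (heat_integrand t x (s,z) * heat_integrand t' y (s,z)) \<partial>lborel \<partial>lborel)"
    by (subst lborel.nn_integral_fst[symmetric]) (auto simp: lborel_prod)
  also have "\<dots> = (\<integral>\<^sup>+s. ennreal (indicator {0..<min t t'} s * heat_kernel (t + t' - 2 * s) x y) \<partial>lborel)"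
  proof (rule nn_integral_cong)
    fix s :: real
    show "(\<integral>\<^sup>+z. ennreal (heat_integrand t x (s,z) * heat_integrand t' y (s,z)) \<partial>lborel)
         = ennreal (indicator {0..<min t t'} s * heat_kernel (t + t' - 2 * s) x y)"
    proof (cases "0 \<le> s \<and> s < min t t'")
      case True
      then have "(\<integral>\<^sup>+z. ennreal (heat_integrand t x (s,z) * heat_integrand t' y (s,z)) \<partial>lborel)
         = (\<integral>\<^sup>+z. ennreal (heat_kernel (t-s) x z * heat_kernel (t'-s) y z) \<partial>lborel)"
        by (simp add: heat_integrand_def)
      also have "\<dots> = ennreal (heat_kernel ((t-s)+(t'-s)) x y)"
        using True by (intro CK) auto
      finally show ?thesis using True by (simp add: algebra_simps)
    next
      case False
      then show ?thesis by (auto simp: heat_integrand_def)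
    qed
  qed
  finally show ?thesis .
qed

lemma P0:
  assumes a: "a > -1" and c: "c \<ge> 0"
  shows "(\<integral>\<^sup>+u. ennreal (indicator {0<..c} u * u powr a) \<partial>lborel) = ennreal (c powr (a+1) / (a+1))"
proof -
  have "(\<integral>\<^sup>+u. ennreal (indicator {0<..c} u * u powr a) \<partial>lborel)
      = (\<integral>\<^sup>+u. ennreal (u powr a) * indicator {0..c} u \<partial>lborel)"
    by (rule nn_integral_cong) (auto simp: indicator_def)
  also have "\<dots> = ennreal (c powr (a+1) / (a+1))"
    by (rule nn_integral_has_integral_lebesgue'[OF _ has_integral_powr_from_0[OF a c]]) simp
  finally show ?thesis .
qed

lemma P0':
  assumes a: "a > -1" and h: "0 \<le> h" "h \<le> b"
  shows "(\<integral>\<^sup>+u. ennreal (indicator {h<..b} u * u powr a) \<partial>lborel)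
       = ennreal (b powr (a+1) / (a+1) - h powr (a+1) / (a+1))"
proof -
  have "(\<integral>\<^sup>+u. ennreal (indicator {0<..b} u * u powr a) \<partial>lborel)
     = (\<integral>\<^sup>+u. ennreal (indicator {0<..h} u * u powr a) + ennreal (indicator {h<..b} u * u powr a) \<partial>lborel)"
    using h by (intro nn_integral_cong) (auto simp: indicator_def)
  also have "\<dots> = (\<integral>\<^sup>+u. ennreal (indicator {0<..h} u * u powr a) \<partial>lborel)
       + (\<integral>\<^sup>+u. ennreal (indicator {h<..b} u * u powr a) \<partial>lborel)"
    by (rule nn_integral_add) auto
  finally have eq: "ennreal (b powr (a+1) / (a+1)) = ennreal (h powr (a+1) / (a+1))
       + (\<integral>\<^sup>+u. ennreal (indicator {h<..b} u * u powr a) \<partial>lborel)"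
    using P0[OF a] h by simp
  have "(\<integral>\<^sup>+u. ennreal (indicator {h<..b} u * u powr a) \<partial>lborel)
      = ennreal (b powr (a+1) / (a+1)) - ennreal (h powr (a+1) / (a+1))"
    unfolding eq by simp
  also have "\<dots> = ennreal (b powr (a+1) / (a+1) - h powr (a+1) / (a+1))"
    using a by (intro ennreal_minus) auto
  finally show ?thesis .
qed

lemma P1:
  fixes \<phi> :: "real \<Rightarrow> real" and t :: real
  assumes [measurable]: "\<phi> \<in> borel_measurable borel"
  shows "(\<integral>\<^sup>+s. ennreal (indicator {0..<t} s * \<phi> (t - s)) \<partial>lborel)
       = (\<integral>\<^sup>+u. ennreal (indicator {0<..t} u * \<phi> u) \<partial>lborel)"
proof -
  have "(\<integral>\<^sup>+u. ennreal (indicator {0<..t} u * \<phi> u) \<partial>lborel)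
     = ennreal \<bar>-1::real\<bar> * (\<integral>\<^sup>+s. ennreal (indicator {0<..t} (t + (-1) * s) * \<phi> (t + (-1) * s)) \<partial>lborel)"
    by (rule nn_integral_real_affine) auto
  also have "\<dots> = (\<integral>\<^sup>+s. ennreal (indicator {0..<t} s * \<phi> (t - s)) \<partial>lborel)"
    by (auto intro!: nn_integral_cong simp: indicator_def)
  finally show ?thesis ..
qed

lemma sqrt8: "sqrt 8 = 2 * sqrt 2"
  using real_sqrt_mult[of 4 2] by simp

lemma hk_same: "u > 0 \<Longrightarrow> heat_kernel u x x = (1 / sqrt (4 * pi)) * u powr (-1/2)"
  by (simp add: heat_kernel_def powr_minus_divide powr_half_sqrt real_sqrt_mult)

lemma I1:
  assumes t: "t \<ge> 0"
  shows "(\<integral>\<^sup>+s. ennreal (indicator {0..<t} s * heat_kernel (t + t - 2 * s) x x) \<partial>lborel)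
       = ennreal (sqrt t / sqrt (2 * pi))"
proof -
  have "(\<integral>\<^sup>+s. ennreal (indicator {0..<t} s * heat_kernel (t + t - 2 * s) x x) \<partial>lborel)
      = (\<integral>\<^sup>+s. ennreal (indicator {0..<t} s * (\<lambda>u. heat_kernel (2 * u) x x) (t - s)) \<partial>lborel)"
    by (simp add: algebra_simps)
  also have "\<dots> = (\<integral>\<^sup>+u. ennreal (indicator {0<..t} u * heat_kernel (2 * u) x x) \<partial>lborel)"
    by (rule P1) measurable
  also have "\<dots> = (\<integral>\<^sup>+u. ennreal (1 / sqrt (8 * pi)) * ennreal (indicator {0<..t} u * u powr (-1/2)) \<partial>lborel)"
  proof (rule nn_integral_cong)
    fix u :: real
    show "ennreal (indicator {0<..t} u * heat_kernel (2 * u) x x) =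
         ennreal (1 / sqrt (8 * pi)) * ennreal (indicator {0<..t} u * u powr (-1/2))"
    proof (cases "u \<in> {0<..t}")
      case True
      then have "heat_kernel (2 * u) x x = (1 / sqrt (8 * pi)) * u powr (-1/2)"
        by (simp add: hk_same powr_mult real_sqrt_mult powr_minus_divide powr_half_sqrt sqrt8)
      then show ?thesis using True by (simp add: ennreal_mult'[symmetric])
    qed simp
  qed
  also have "\<dots> = ennreal (1 / sqrt (8 * pi)) * ennreal (t powr (-1/2+1) / (-1/2+1))"
    by (subst nn_integral_cmult) (auto simp: P0 t)
  also have "\<dots> = ennreal (sqrt t / sqrt (2 * pi))"
  proof -
    have "(1 / sqrt (8 * pi)) * (t powr (-1/2+1) / (-1/2+1)) = sqrt t / sqrt (2 * pi)"
    proof -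
      have "sqrt (8 * pi) = 2 * sqrt (2 * pi)"
        by (simp add: real_sqrt_mult sqrt8)
      then show ?thesis using t by (simp add: powr_half_sqrt field_simps)
    qed
    then show ?thesis by (simp add: ennreal_mult'[symmetric])
  qed
  finally show ?thesis .
qed

lemma I2:
  assumes s: "0 \<le> s" "s < t"
  shows "(\<integral>\<^sup>+r. ennreal (indicator {0..<min t s} r * heat_kernel (t + s - 2 * r) x x) \<partial>lborel)
       = ennreal ((sqrt (t+s) - sqrt (t-s)) / (2 * sqrt pi))"
proof -
  define f where "f u = ennreal (indicator {t-s<..t+s} u * heat_kernel u x x)" for u
  have fm[measurable]: "f \<in> borel_measurable borel" unfolding f_def by measurable
  have "(\<integral>\<^sup>+r. ennreal (indicator {0..<min t s} r * heat_kernel (t + s - 2 * r) x x) \<partial>lborel)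
      = (\<integral>\<^sup>+r. f (t + s - 2 * r) \<partial>lborel)"
    using s by (intro nn_integral_cong) (auto simp: f_def indicator_def)
  also have "\<dots> = ennreal \<bar>-1/2::real\<bar> * (\<integral>\<^sup>+u. f (t + s - 2 * ((t+s)/2 + (-1/2) * u)) \<partial>lborel)"
    by (rule nn_integral_real_affine) auto
  also have "\<dots> = ennreal (1/2) * (\<integral>\<^sup>+u. f u \<partial>lborel)"
  proof -
    have e0: "\<And>u. t + s - 2 * ((t+s)/2 + (-1/2) * u) = u" by (simp add: field_simps)
    have e: "(\<lambda>u. f (t + s - 2 * ((t+s)/2 + (-1/2) * u))) = f" by (rule ext) (simp only: e0)
    show ?thesis unfolding e by simp
  qed
  also have "(\<integral>\<^sup>+u. f u \<partial>lborel) = (\<integral>\<^sup>+u. ennreal (1 / sqrt (4 * pi)) * ennreal (indicator {t-s<..t+s} u * u powr (-1/2)) \<partial>lborel)"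
  proof (rule nn_integral_cong)
    fix u :: real
    show "f u = ennreal (1 / sqrt (4 * pi)) * ennreal (indicator {t-s<..t+s} u * u powr (-1/2))"
    proof (cases "u \<in> {t-s<..t+s}")
      case True
      then have "u > 0" using s by auto
      then show ?thesis using True by (simp add: f_def hk_same ennreal_mult'[symmetric])
    qed (simp add: f_def)
  qed
  also have "\<dots> = ennreal (1 / sqrt (4 * pi)) * ennreal ((t+s) powr (-1/2+1) / (-1/2+1) - (t-s) powr (-1/2+1) / (-1/2+1))"
    using s by (subst nn_integral_cmult) (auto simp: P0')
  also have "ennreal (1/2) * (ennreal (1 / sqrt (4 * pi)) * ennreal ((t+s) powr (-1/2+1) / (-1/2+1) - (t-s) powr (-1/2+1) / (-1/2+1)))
      = ennreal ((sqrt (t+s) - sqrt (t-s)) / (2 * sqrt pi))"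
  proof -
    define X where "X = (t+s) powr (-1/2+1) / (-1/2+1) - (t-s) powr (-1/2+1) / (-1/2+1)"
    have X0: "X \<ge> 0" unfolding X_def using s by (auto intro!: divide_right_mono powr_mono2)
    have A: "(1/2) * ((1 / sqrt (4 * pi)) * X) = (sqrt (t+s) - sqrt (t-s)) / (2 * sqrt pi)"
      using s by (simp add: X_def powr_half_sqrt real_sqrt_mult field_simps)
    have "ennreal ((1/2) * ((1 / sqrt (4 * pi)) * X)) = ennreal (1/2) * ennreal ((1 / sqrt (4 * pi)) * X)"
      by (rule ennreal_mult) (simp_all add: X0)
    also have "ennreal ((1 / sqrt (4 * pi)) * X) = ennreal (1 / sqrt (4 * pi)) * ennreal X"
      by (rule ennreal_mult) (simp_all add: X0)
    finally show ?thesis unfolding X_def[symmetric] A by simp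
  qed
  finally show ?thesis .
qed

lemma one_minus_exp_le: "(v::real) \<ge> 0 \<Longrightarrow> 1 - exp (- v) \<le> v powr (1/4)"
proof (cases "v \<le> 1")
  case True
  assume v: "v \<ge> 0"
  have "1 - exp (-v) \<le> v" using exp_ge_add_one_self[of "-v"] by simp
  also have "v \<le> v powr (1/4)"
  proof (cases "v = 0")
    case False
    then have "v powr 1 \<le> v powr (1/4)" using True v by (intro powr_mono') auto
    then show ?thesis using v False by simp
  qed simp
  finally show ?thesis .
next
  case False
  then have "1 \<le> v powr (1/4)" by (simp add: ge_one_powr_ge_zero)
  then show ?thesis by (smt (verit) exp_gt_zero)
qed

lemma hk_off_bound:
  assumes u: "u > 0"
  shows "heat_kernel (2 * u) x x \<le> heat_kernel (2 * u) x y + ((x-y)\<^sup>2/8) powr (1/4) / sqrt (8 * pi) * u powr (-3/4)"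
proof -
  define v where "v = (x-y)\<^sup>2 / (8 * u)"
  have v0: "v \<ge> 0" using u by (simp add: v_def)
  have a: "heat_kernel (2 * u) x x = u powr (-1/2) / sqrt (8 * pi)"
    using u by (simp add: hk_same powr_mult real_sqrt_mult powr_minus_divide powr_half_sqrt sqrt8)
  have b: "heat_kernel (2 * u) x y = exp (- v) * (u powr (-1/2) / sqrt (8 * pi))"
    using u by (simp add: heat_kernel_def v_def powr_minus_divide powr_half_sqrt real_sqrt_mult sqrt8 field_simps)
  have c: "v powr (1/4) = ((x-y)\<^sup>2/8) powr (1/4) * u powr (-1/4)"
    using u by (simp add: v_def powr_divide powr_mult powr_minus_divide field_simps)
  have d: "u powr (-1/4) * u powr (-1/2) = u powr (-3/4)"
    using u by (simp add: powr_add[symmetric])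
  have "heat_kernel (2 * u) x x - heat_kernel (2 * u) x y = (1 - exp (-v)) * (u powr (-1/2) / sqrt (8 * pi))"
    unfolding a b by (simp add: left_diff_distrib diff_divide_distrib)
  also have "\<dots> \<le> v powr (1/4) * (u powr (-1/2) / sqrt (8 * pi))"
    using one_minus_exp_le[OF v0] by (intro mult_right_mono) auto
  also have "\<dots> = ((x-y)\<^sup>2/8) powr (1/4) / sqrt (8 * pi) * u powr (-3/4)"
    unfolding c d[symmetric] by simp
  finally show ?thesis by simp
qed

lemma I3:
  assumes t: "t \<ge> 0"
  shows "(\<integral>\<^sup>+s. ennreal (indicator {0..<t} s * heat_kernel (t + t - 2 * s) x x) \<partial>lborel)
     \<le> (\<integral>\<^sup>+s. ennreal (indicator {0..<t} s * heat_kernel (t + t - 2 * s) x y) \<partial>lborel)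
       + ennreal (4 * ((x-y)\<^sup>2/8) powr (1/4) * t powr (1/4) / sqrt (8 * pi))"
proof -
  define C where "C = ((x-y)\<^sup>2/8) powr (1/4) / sqrt (8 * pi)"
  have C0: "C \<ge> 0" by (simp add: C_def)
  have "(\<integral>\<^sup>+s. ennreal (indicator {0..<t} s * (C * (t - s) powr (-3/4))) \<partial>lborel)
      = (\<integral>\<^sup>+u. ennreal (indicator {0<..t} u * (C * u powr (-3/4))) \<partial>lborel)"
    by (rule P1[where \<phi>="\<lambda>u. C * u powr (-3/4)"]) measurable
  also have "\<dots> = (\<integral>\<^sup>+u. ennreal C * ennreal (indicator {0<..t} u * u powr (-3/4)) \<partial>lborel)"
    using C0 by (intro nn_integral_cong) (simp add: ennreal_mult'[symmetric] mult.left_commute)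
  also have "\<dots> = ennreal C * ennreal (t powr (-3/4+1) / (-3/4+1))"
    using t by (subst nn_integral_cmult) (auto simp: P0)
  also have "\<dots> = ennreal (4 * ((x-y)\<^sup>2/8) powr (1/4) * t powr (1/4) / sqrt (8 * pi))"
    using C0 by (simp add: ennreal_mult'[symmetric] C_def)
  finally have eq: "(\<integral>\<^sup>+s. ennreal (indicator {0..<t} s * (C * (t - s) powr (-3/4))) \<partial>lborel)
      = ennreal (4 * ((x-y)\<^sup>2/8) powr (1/4) * t powr (1/4) / sqrt (8 * pi))" .
  have "(\<integral>\<^sup>+s. ennreal (indicator {0..<t} s * heat_kernel (t + t - 2 * s) x x) \<partial>lborel)
     \<le> (\<integral>\<^sup>+s. ennreal (indicator {0..<t} s * heat_kernel (t + t - 2 * s) x y)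
            + ennreal (indicator {0..<t} s * (C * (t - s) powr (-3/4))) \<partial>lborel)"
  proof (rule nn_integral_mono)
    fix s :: real
    show "ennreal (indicator {0..<t} s * heat_kernel (t + t - 2 * s) x x)
       \<le> ennreal (indicator {0..<t} s * heat_kernel (t + t - 2 * s) x y)
            + ennreal (indicator {0..<t} s * (C * (t - s) powr (-3/4)))"
    proof (cases "s \<in> {0..<t}")
      case True
      then have u: "t - s > 0" by auto
      have "heat_kernel (2 * (t - s)) x x \<le> heat_kernel (2 * (t - s)) x y + C * (t - s) powr (-3/4)"
        using hk_off_bound[OF u, of x y] by (simp add: C_def)
      moreover have "heat_kernel (2 * (t - s)) x y \<ge> 0" using u by (intro hk_nonneg) auto
      moreover have "C * (t - s) powr (-3/4) \<ge> 0" using C0 by simp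
      ultimately show ?thesis using True by (simp add: ennreal_plus[symmetric] algebra_simps del: ennreal_plus)
    qed simp
  qed
  also have "\<dots> = (\<integral>\<^sup>+s. ennreal (indicator {0..<t} s * heat_kernel (t + t - 2 * s) x y) \<partial>lborel)
      + (\<integral>\<^sup>+s. ennreal (indicator {0..<t} s * (C * (t - s) powr (-3/4))) \<partial>lborel)"
    by (rule nn_integral_add) auto
  finally show ?thesis unfolding eq .
qed

lemma I4:
  assumes a: "0 \<le> a" "2 * a < c"
  shows "(\<integral>\<^sup>+r. ennreal (indicator {0..<a} r * heat_kernel (c - 2 * r) 0 0) \<partial>lborel)
      \<le> ennreal (a / sqrt (4 * pi * (c - 2 * a)))"
proof -
  have "(\<integral>\<^sup>+r. ennreal (indicator {0..<a} r * heat_kernel (c - 2 * r) 0 0) \<partial>lborel)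
     \<le> (\<integral>\<^sup>+r. ennreal (1 / sqrt (4 * pi * (c - 2 * a))) * indicator {0..<a} r \<partial>lborel)"
  proof (rule nn_integral_mono)
    fix r :: real
    show "ennreal (indicator {0..<a} r * heat_kernel (c - 2 * r) 0 0)
        \<le> ennreal (1 / sqrt (4 * pi * (c - 2 * a))) * indicator {0..<a} r"
    proof (cases "r \<in> {0..<a}")
      case True
      have "heat_kernel (c - 2 * r) 0 0 = 1 / sqrt (4 * pi * (c - 2 * r))"
        by (simp add: heat_kernel_def)
      also have "\<dots> \<le> 1 / sqrt (4 * pi * (c - 2 * a))"
        using True a by (intro divide_left_mono) (auto intro!: mult_pos_pos)
      finally show ?thesis using True by (simp add: ennreal_leI)
    qed simp
  qed
  also have "\<dots> = ennreal (1 / sqrt (4 * pi * (c - 2 * a))) * emeasure lborel {0..<a}"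
    by (rule nn_integral_cmult_indicator) simp
  also have "\<dots> = ennreal (a / sqrt (4 * pi * (c - 2 * a)))"
    using a by (simp add: ennreal_mult'[symmetric])
  finally show ?thesis .
qed

lemma gauss_split:
  fixes a v \<sigma> :: real
  assumes a: "0 \<le> a" "a \<le> v" and \<sigma>: "\<sigma> > 0"
  shows "exp (- v\<^sup>2 / (2 * \<sigma>\<^sup>2)) \<le> exp (- a\<^sup>2 / (2 * \<sigma>\<^sup>2)) * exp (- (v - a)\<^sup>2 / (2 * \<sigma>\<^sup>2))"
proof -
  have id: "v\<^sup>2 = a\<^sup>2 + (v - a)\<^sup>2 + 2 * a * (v - a)" by (simp add: power2_eq_square algebra_simps)
  have "2 * a * (v - a) \<ge> 0" using a by simp
  then have "- v\<^sup>2 \<le> - a\<^sup>2 + - (v - a)\<^sup>2" using id by linarith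
  then have "- v\<^sup>2 / (2 * \<sigma>\<^sup>2) \<le> (- a\<^sup>2 + - (v - a)\<^sup>2) / (2 * \<sigma>\<^sup>2)"
    using \<sigma> by (intro divide_right_mono) auto
  also have "\<dots> = - a\<^sup>2 / (2 * \<sigma>\<^sup>2) + - (v - a)\<^sup>2 / (2 * \<sigma>\<^sup>2)" by (rule add_divide_distrib)
  finally show ?thesis by (simp add: exp_add[symmetric])
qed

lemma nd_tail_pt:
  assumes \<sigma>: "\<sigma> > 0" and a: "a \<ge> 0"
  shows "normal_density 0 \<sigma> v * indicator {v. a \<le> \<bar>v\<bar>} v
     \<le> exp (- a\<^sup>2 / (2 * \<sigma>\<^sup>2)) * (normal_density a \<sigma> v + normal_density (-a) \<sigma> v)"
proof (cases "a \<le> \<bar>v\<bar>")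
  case True
  define E where "E u = exp (- u\<^sup>2 / (2 * \<sigma>\<^sup>2))" for u
  have E0: "\<And>u. E u > 0" by (simp add: E_def)
  have key: "E v \<le> E a * (E (v - a) + E (v - - a))"
  proof (cases "v \<ge> 0")
    case True
    then have "E v \<le> E a * E (v - a)" using \<open>a \<le> \<bar>v\<bar>\<close> a \<sigma> unfolding E_def by (intro gauss_split) auto
    also have "\<dots> \<le> E a * (E (v - a) + E (v - - a))" using E0 by (intro mult_left_mono) (auto simp: less_imp_le)
    finally show ?thesis .
  next
    case False
    then have "E (-v) \<le> E a * E (-v - a)" using \<open>a \<le> \<bar>v\<bar>\<close> a \<sigma> unfolding E_def by (intro gauss_split) auto
    moreover have "E (-v) = E v" "E (-v - a) = E (v - - a)" unfolding E_def by (simp_all add: power2_commute add.commute)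
    ultimately have "E v \<le> E a * E (v - - a)" by simp
    also have "\<dots> \<le> E a * (E (v - a) + E (v - - a))" using E0 by (intro mult_left_mono) (auto simp: less_imp_le)
    finally show ?thesis .
  qed
  define C where "C = 1 / sqrt (2 * pi * \<sigma>\<^sup>2)"
  have C0: "C \<ge> 0" by (simp add: C_def)
  have nd: "\<And>m. normal_density m \<sigma> v = C * E (v - m)" by (simp add: normal_density_def C_def E_def)
  have "normal_density 0 \<sigma> v * indicator {v. a \<le> \<bar>v\<bar>} v = C * E v" using True nd[of 0] by simp
  also have "\<dots> \<le> C * (E a * (E (v - a) + E (v - - a)))" using key C0 by (rule mult_left_mono)
  also have "\<dots> = E a * (normal_density a \<sigma> v + normal_density (-a) \<sigma> v)"
    unfolding nd by (simp add: distrib_left mult.left_commute)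
  finally show ?thesis by (simp add: E_def)
next
  case False
  then show ?thesis by (simp add: add_nonneg_nonneg)
qed

lemma nd_tail:
  assumes \<sigma>: "\<sigma> > 0" and a: "a \<ge> 0"
  shows "(\<integral>v. normal_density 0 \<sigma> v * indicator {v. a \<le> \<bar>v\<bar>} v \<partial>lborel) \<le> 2 * exp (- a\<^sup>2 / (2 * \<sigma>\<^sup>2))"
proof -
  have int: "integrable lborel (\<lambda>v. exp (- a\<^sup>2 / (2 * \<sigma>\<^sup>2)) * (normal_density a \<sigma> v + normal_density (-a) \<sigma> v))"
    using \<sigma> by (intro integrable_mult_right Bochner_Integration.integrable_add) auto
  have "(\<integral>v. normal_density 0 \<sigma> v * indicator {v. a \<le> \<bar>v\<bar>} v \<partial>lborel)
     \<le> (\<integral>v. exp (- a\<^sup>2 / (2 * \<sigma>\<^sup>2)) * (normal_density a \<sigma> v + normal_density (-a) \<sigma> v) \<partial>lborel)"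
  proof (rule integral_mono[OF _ int])
    show "integrable lborel (\<lambda>v. normal_density 0 \<sigma> v * indicator {v. a \<le> \<bar>v\<bar>} v)"
      by (rule Bochner_Integration.integrable_bound[OF integrable_normal_density[where \<mu>=0 and \<sigma>=\<sigma>, OF \<sigma>]]) (auto simp: indicator_def)
    show "\<And>v. v \<in> space lborel \<Longrightarrow> normal_density 0 \<sigma> v * indicator {v. a \<le> \<bar>v\<bar>} v
      \<le> exp (- a\<^sup>2 / (2 * \<sigma>\<^sup>2)) * (normal_density a \<sigma> v + normal_density (-a) \<sigma> v)"
      using nd_tail_pt[OF \<sigma> a] by auto
  qed
  also have "\<dots> = 2 * exp (- a\<^sup>2 / (2 * \<sigma>\<^sup>2))"
    using \<sigma> by simp
  finally show ?thesis .
qed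

lemma nd_mgf_pt:
  assumes \<sigma>: "\<sigma> > 0"
  shows "normal_density 0 \<sigma> v * exp (l * v + c) = exp (l\<^sup>2 * \<sigma>\<^sup>2 / 2 + c) * normal_density (l * \<sigma>\<^sup>2) \<sigma> v"
proof -
  have "- v\<^sup>2 / (2 * \<sigma>\<^sup>2) + (l * v + c) = l\<^sup>2 * \<sigma>\<^sup>2 / 2 + c + - (v - l * \<sigma>\<^sup>2)\<^sup>2 / (2 * \<sigma>\<^sup>2)"
    using \<sigma> by (simp add: divide_simps) (simp add: power2_eq_square algebra_simps)
  then have "exp (- v\<^sup>2 / (2 * \<sigma>\<^sup>2)) * exp (l * v + c) = exp (l\<^sup>2 * \<sigma>\<^sup>2 / 2 + c) * exp (- (v - l * \<sigma>\<^sup>2)\<^sup>2 / (2 * \<sigma>\<^sup>2))"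
    by (simp add: exp_add[symmetric])
  then show ?thesis by (simp add: normal_density_def algebra_simps)
qed

lemma nd_mgf:
  assumes \<sigma>: "\<sigma> > 0"
  shows "integrable lborel (\<lambda>v. normal_density 0 \<sigma> v * exp (l * v + c))"
    and "(\<integral>v. normal_density 0 \<sigma> v * exp (l * v + c) \<partial>lborel) = exp (l\<^sup>2 * \<sigma>\<^sup>2 / 2 + c)"
  using \<sigma> by (simp_all add: nd_mgf_pt)

lemma F_sq_nn:
  assumes t: "t \<ge> 0"
  shows "(\<integral>\<^sup>+w. ennreal ((heat_integrand t x w)\<^sup>2) \<partial>lborel) = ennreal (sqrt t / sqrt (2 * pi))"
  using K2[OF t t, of x x] I1[OF t, of x] by (simp add: power2_eq_square)

lemma F_sq_int:
  assumes t: "t \<ge> 0"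
  shows "integrable lborel (\<lambda>w. (heat_integrand t x w)\<^sup>2)"
  by (rule integrableI_nonneg) (auto simp: F_sq_nn[OF t])

lemma F_sq_val:
  assumes t: "t \<ge> 0"
  shows "(\<integral>w. (heat_integrand t x w)\<^sup>2 \<partial>lborel) = sqrt t / sqrt (2 * pi)"
proof -
  have "sqrt t / sqrt (2 * pi) \<ge> 0" using t by simp
  then show ?thesis by (subst integral_eq_nn_integral) (auto simp: F_sq_nn[OF t])
qed

lemma wn_F:
  assumes t: "t \<ge> 0"
  shows "wn_integrand (heat_integrand t x)"
proof -
  have "\<forall>s y. s < 0 \<longrightarrow> heat_integrand t x (s, y) = 0" by (simp add: heat_integrand_def)
  moreover have "heat_integrand t x \<in> borel_measurable lborel" by simp
  ultimately show ?thesis unfolding wn_integrand_def using F_sq_int[OF t] by blast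
qed

lemma F_prod_int:
  assumes t: "t \<ge> 0" and t': "t' \<ge> 0"
  shows "integrable lborel (\<lambda>w. heat_integrand t x w * heat_integrand t' y w)"
proof (rule Bochner_Integration.integrable_bound)
  show "integrable lborel (\<lambda>w. (heat_integrand t x w)\<^sup>2 + (heat_integrand t' y w)\<^sup>2)"
    using F_sq_int[OF t] F_sq_int[OF t'] by (rule Bochner_Integration.integrable_add)
  show "(\<lambda>w. heat_integrand t x w * heat_integrand t' y w) \<in> borel_measurable lborel" by simp
  show "AE w in lborel. norm (heat_integrand t x w * heat_integrand t' y w)
      \<le> norm ((heat_integrand t x w)\<^sup>2 + (heat_integrand t' y w)\<^sup>2)"
  proof (rule AE_I2)
    fix w
    have a: "heat_integrand t x w \<ge> 0" "heat_integrand t' y w \<ge> 0" by (simp_all add: hi_nonneg)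
    have "2 * heat_integrand t x w * heat_integrand t' y w \<le> (heat_integrand t x w)\<^sup>2 + (heat_integrand t' y w)\<^sup>2"
      by (rule sum_squares_bound)
    moreover have "heat_integrand t x w * heat_integrand t' y w \<ge> 0" using a by simp
    moreover have "2 * heat_integrand t x w * heat_integrand t' y w = 2 * (heat_integrand t x w * heat_integrand t' y w)" by simp
    ultimately have "heat_integrand t x w * heat_integrand t' y w \<le> (heat_integrand t x w)\<^sup>2 + (heat_integrand t' y w)\<^sup>2"
      by linarith
    then show "norm (heat_integrand t x w * heat_integrand t' y w)
      \<le> norm ((heat_integrand t x w)\<^sup>2 + (heat_integrand t' y w)\<^sup>2)"
      using a by (simp add: abs_mult)
  qed
qed

lemma F_prod_val:
  assumes t: "t \<ge> 0" and t': "t' \<ge> 0"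
  shows "(\<integral>w. heat_integrand t x w * heat_integrand t' y w \<partial>lborel)
       = enn2real (\<integral>\<^sup>+s. ennreal (indicator {0..<min t t'} s * heat_kernel (t + t' - 2 * s) x y) \<partial>lborel)"
  by (subst integral_eq_nn_integral) (auto simp: K2[OF t t'] hi_nonneg)

lemma ip_temporal:
  assumes s: "0 \<le> s" "s < t"
  shows "(\<integral>w. heat_integrand t x w * heat_integrand s x w \<partial>lborel) = (sqrt (t+s) - sqrt (t-s)) / (2 * sqrt pi)"
proof -
  have "sqrt (t-s) \<le> sqrt (t+s)" using s by simp
  then have nn: "(sqrt (t+s) - sqrt (t-s)) / (2 * sqrt pi) \<ge> 0" by simp
  have "(\<integral>w. heat_integrand t x w * heat_integrand s x w \<partial>lborel)
       = enn2real (\<integral>\<^sup>+r. ennreal (indicator {0..<min t s} r * heat_kernel (t + s - 2 * r) x x) \<partial>lborel)"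
    using s by (intro F_prod_val) auto
  also have "\<dots> = enn2real (ennreal ((sqrt (t+s) - sqrt (t-s)) / (2 * sqrt pi)))"
    by (simp only: I2[OF s])
  finally show ?thesis using nn by simp
qed

lemma ip_spatial:
  assumes t: "t \<ge> 0"
  shows "(\<integral>w. heat_integrand t x w * heat_integrand t y w \<partial>lborel)
     \<ge> sqrt t / sqrt (2 * pi) - 4 * ((x-y)\<^sup>2/8) powr (1/4) * t powr (1/4) / sqrt (8 * pi)"
proof -
  define A where "A = (\<integral>\<^sup>+s. ennreal (indicator {0..<t} s * heat_kernel (t + t - 2 * s) x y) \<partial>lborel)"
  have "A \<le> (\<integral>\<^sup>+s. ennreal (indicator {0..<t} s * heat_kernel (t + t - 2 * s) x x) \<partial>lborel)"
    unfolding A_def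
  proof (rule nn_integral_mono)
    fix s :: real
    show "ennreal (indicator {0..<t} s * heat_kernel (t + t - 2 * s) x y)
         \<le> ennreal (indicator {0..<t} s * heat_kernel (t + t - 2 * s) x x)"
    proof (cases "s \<in> {0..<t}")
      case True
      then show ?thesis by (intro ennreal_leI) (simp add: heat_kernel_def divide_right_mono)
    qed simp
  qed
  then have Afin: "A < \<infinity>" unfolding I1[OF t] by (simp add: top.not_eq_extremum le_less_trans)
  have "ennreal (sqrt t / sqrt (2 * pi)) \<le> A + ennreal (4 * ((x-y)\<^sup>2/8) powr (1/4) * t powr (1/4) / sqrt (8 * pi))"
    using I3[OF t, of x y] I1[OF t, of x] unfolding A_def by simp
  moreover obtain a where a: "A = ennreal a" "a \<ge> 0" using Afin by (cases A) auto
  ultimately have "sqrt t / sqrt (2 * pi) \<le> a + 4 * ((x-y)\<^sup>2/8) powr (1/4) * t powr (1/4) / sqrt (8 * pi)"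
    by (simp add: ennreal_plus[symmetric] del: ennreal_plus)
  moreover have "(\<integral>w. heat_integrand t x w * heat_integrand t y w \<partial>lborel) = a"
    using F_prod_val[OF t t, of x y] a unfolding A_def by simp
  ultimately show ?thesis by simp
qed

lemma ip_far:
  assumes ab: "0 \<le> a" "a < b"
  shows "(\<integral>w. heat_integrand a 0 w * heat_integrand b 0 w \<partial>lborel) \<le> a / sqrt (4 * pi * (b - a))"
proof -
  have le: "(\<integral>\<^sup>+r. ennreal (indicator {0..<a} r * heat_kernel ((a + b) - 2 * r) 0 0) \<partial>lborel)
      \<le> ennreal (a / sqrt (4 * pi * ((a + b) - 2 * a)))"
    using ab by (intro I4) auto
  have "(\<integral>w. heat_integrand a 0 w * heat_integrand b 0 w \<partial>lborel)
     = enn2real (\<integral>\<^sup>+r. ennreal (indicator {0..<a} r * heat_kernel ((a + b) - 2 * r) 0 0) \<partial>lborel)"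
    using F_prod_val[of a b 0 0] ab by simp
  also have "\<dots> \<le> a / sqrt (4 * pi * ((a + b) - 2 * a))"
    using le ab by (intro enn2real_leI) auto
  finally show ?thesis by (simp add: algebra_simps)
qed

lemma wn_lin:
  assumes f: "wn_integrand f" and h: "wn_integrand h"
  shows "wn_integrand (\<lambda>z. c * f z + d * h z)"
proof -
  have fm: "f \<in> borel_measurable lborel" and hm: "h \<in> borel_measurable lborel"
    using f h by (auto simp: wn_integrand_def)
  have fi: "integrable lborel (\<lambda>z. (f z)\<^sup>2)" and hi: "integrable lborel (\<lambda>z. (h z)\<^sup>2)"
    using f h by (auto simp: wn_integrand_def)
  have "integrable lborel (\<lambda>z. (c * f z + d * h z)\<^sup>2)"
  proof (rule Bochner_Integration.integrable_bound)
    show "integrable lborel (\<lambda>z. 2 * c\<^sup>2 * (f z)\<^sup>2 + 2 * d\<^sup>2 * (h z)\<^sup>2)"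
      using fi hi by auto
    show "(\<lambda>z. (c * f z + d * h z)\<^sup>2) \<in> borel_measurable lborel" using fm hm by measurable
    show "AE z in lborel. norm ((c * f z + d * h z)\<^sup>2) \<le> norm (2 * c\<^sup>2 * (f z)\<^sup>2 + 2 * d\<^sup>2 * (h z)\<^sup>2)"
    proof (rule AE_I2)
      fix z
      have "2 * (c * f z) * (d * h z) \<le> (c * f z)\<^sup>2 + (d * h z)\<^sup>2" by (rule sum_squares_bound)
      then have "(c * f z + d * h z)\<^sup>2 \<le> 2 * c\<^sup>2 * (f z)\<^sup>2 + 2 * d\<^sup>2 * (h z)\<^sup>2"
        by (simp add: power2_sum power_mult_distrib)
      then show "norm ((c * f z + d * h z)\<^sup>2) \<le> norm (2 * c\<^sup>2 * (f z)\<^sup>2 + 2 * d\<^sup>2 * (h z)\<^sup>2)"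
        by simp
    qed
  qed
  then show ?thesis using f h fm hm by (auto simp: wn_integrand_def)
qed

lemma sq_expand:
  fixes f h :: "'a::euclidean_space \<Rightarrow> real" and c d :: real
  assumes "integrable lborel (\<lambda>z. (f z)\<^sup>2)" "integrable lborel (\<lambda>z. (h z)\<^sup>2)" "integrable lborel (\<lambda>z. f z * h z)"
  shows "(\<integral>z. (c * f z + d * h z)\<^sup>2 \<partial>lborel)
     = c\<^sup>2 * (\<integral>z. (f z)\<^sup>2 \<partial>lborel) + 2 * c * d * (\<integral>z. f z * h z \<partial>lborel) + d\<^sup>2 * (\<integral>z. (h z)\<^sup>2 \<partial>lborel)"
proof -
  have "(\<lambda>z. (c * f z + d * h z)\<^sup>2) = (\<lambda>z. c\<^sup>2 * (f z)\<^sup>2 + (2 * c * d) * (f z * h z) + d\<^sup>2 * (h z)\<^sup>2)"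
    by (rule ext) (simp add: power2_sum power_mult_distrib algebra_simps)
  then show ?thesis using assms by simp
qed

lemma var_diff:
  assumes t: "t \<ge> 0" and s: "s \<ge> 0"
  shows "(\<integral>z. (heat_integrand t x z - heat_integrand s y z)\<^sup>2 \<partial>lborel)
     = (\<integral>z. (heat_integrand t x z)\<^sup>2 \<partial>lborel) - 2 * (\<integral>z. heat_integrand t x z * heat_integrand s y z \<partial>lborel)
       + (\<integral>z. (heat_integrand s y z)\<^sup>2 \<partial>lborel)"
  using sq_expand[OF F_sq_int[OF t] F_sq_int[OF s] F_prod_int[OF t s], where c=1 and d="-1"]
  by simp

lemma sqrt_sum_le: "0 \<le> t \<Longrightarrow> 0 \<le> s \<Longrightarrow> sqrt t + sqrt s \<le> sqrt 2 * sqrt (t + s)"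
proof -
  assume t: "0 \<le> t" and s: "0 \<le> s"
  have "2 * sqrt t * sqrt s \<le> (sqrt t)\<^sup>2 + (sqrt s)\<^sup>2" by (rule sum_squares_bound)
  then have "(sqrt t + sqrt s)\<^sup>2 \<le> 2 * (t + s)" using t s by (simp add: power2_sum)
  then have "sqrt ((sqrt t + sqrt s)\<^sup>2) \<le> sqrt (2 * (t + s))" by (rule real_sqrt_le_mono)
  moreover have "sqrt (2 * (t + s)) = sqrt 2 * sqrt (t + s)" by (rule real_sqrt_mult)
  moreover have "sqrt ((sqrt t + sqrt s)\<^sup>2) = sqrt t + sqrt s" using t s by simp
  ultimately show ?thesis by simp
qed

lemma V_temp:
  assumes s: "0 \<le> s" "s \<le> t"
  shows "(\<integral>z. (heat_integrand t x z - heat_integrand s x z)\<^sup>2 \<partial>lborel) \<le> sqrt (t - s)"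
proof (cases "s = t")
  case True then show ?thesis by simp
next
  case False
  then have st: "s < t" using s by simp
  have t: "t \<ge> 0" using s by simp
  have "(\<integral>z. (heat_integrand t x z - heat_integrand s x z)\<^sup>2 \<partial>lborel)
      = sqrt t / sqrt (2 * pi) - 2 * ((sqrt (t+s) - sqrt (t-s)) / (2 * sqrt pi)) + sqrt s / sqrt (2 * pi)"
    unfolding var_diff[OF t s(1)] F_sq_val[OF t] F_sq_val[OF s(1)] ip_temporal[OF s(1) st] ..
  also have "\<dots> = (sqrt t + sqrt s) / (sqrt 2 * sqrt pi) - sqrt (t+s) / sqrt pi + sqrt (t-s) / sqrt pi"
    by (simp add: real_sqrt_mult field_simps)
  also have "(sqrt t + sqrt s) / (sqrt 2 * sqrt pi) \<le> sqrt (t+s) / sqrt pi"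
  proof -
    have "(sqrt t + sqrt s) / (sqrt 2 * sqrt pi) \<le> (sqrt 2 * sqrt (t + s)) / (sqrt 2 * sqrt pi)"
      using sqrt_sum_le[OF t s(1)] by (intro divide_right_mono) auto
    then show ?thesis by simp
  qed
  then have "(sqrt t + sqrt s) / (sqrt 2 * sqrt pi) - sqrt (t+s) / sqrt pi + sqrt (t-s) / sqrt pi
      \<le> sqrt (t-s) / sqrt pi" by simp
  also have "\<dots> \<le> sqrt (t - s)"
  proof -
    have "1 \<le> sqrt pi" using pi_gt3 by simp
    then show ?thesis using st by (simp add: divide_le_eq mult_le_cancel_left1)
  qed
  finally show ?thesis .
qed

lemma V_space:
  assumes t: "t \<ge> 0"
  shows "(\<integral>z. (heat_integrand t x z - heat_integrand t y z)\<^sup>2 \<partial>lborel) \<le> 2 * sqrt \<bar>x - y\<bar> * t powr (1/4)"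
proof -
  define D where "D = 4 * ((x-y)\<^sup>2/8) powr (1/4) * t powr (1/4) / sqrt (8 * pi)"
  have "(\<integral>z. (heat_integrand t x z - heat_integrand t y z)\<^sup>2 \<partial>lborel)
      = 2 * (sqrt t / sqrt (2 * pi)) - 2 * (\<integral>z. heat_integrand t x z * heat_integrand t y z \<partial>lborel)"
    unfolding var_diff[OF t t] F_sq_val[OF t] by simp
  also have "\<dots> \<le> 2 * D"
    using ip_spatial[OF t, of x y] unfolding D_def by simp
  also have "2 * D \<le> 2 * sqrt \<bar>x - y\<bar> * t powr (1/4)"
  proof -
    have a: "((x-y)\<^sup>2/8) powr (1/4) \<le> ((x-y)\<^sup>2) powr (1/4)"
      by (intro powr_mono2) auto
    have b: "((x-y)\<^sup>2) powr (1/4) = sqrt \<bar>x - y\<bar>"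
    proof (cases "x = y")
      case True then show ?thesis by simp
    next
      case False
      then have "(x-y)\<^sup>2 = \<bar>x-y\<bar> powr 2" by (simp add: powr_numeral)
      then have "((x-y)\<^sup>2) powr (1/4) = (\<bar>x-y\<bar> powr 2) powr (1/4)" by (simp only:)
      also have "\<dots> = \<bar>x-y\<bar> powr (2 * (1/4))" by (rule powr_powr)
      also have "\<dots> = sqrt \<bar>x-y\<bar>" by (simp add: powr_half_sqrt)
      finally show ?thesis .
    qed
    have c: "4 \<le> sqrt (8 * pi)"
    proof -
      have "sqrt 16 \<le> sqrt (8 * pi)" using pi_gt3 by (intro real_sqrt_le_mono) simp
      then show ?thesis by simp
    qed
    have "D \<le> 4 * sqrt \<bar>x - y\<bar> * t powr (1/4) / sqrt (8 * pi)"
      unfolding D_def using a b by (intro divide_right_mono mult_right_mono mult_left_mono) auto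
    also have "\<dots> \<le> 4 * sqrt \<bar>x - y\<bar> * t powr (1/4) / 4"
      using c by (intro divide_left_mono) auto
    finally show ?thesis by simp
  qed
  finally show ?thesis .
qed

locale setting =
  fixes M :: "'a measure" and W :: "(real \<times> real \<Rightarrow> real) \<Rightarrow> 'a \<Rightarrow> real"
    and g :: "real \<Rightarrow> real \<Rightarrow> 'a \<Rightarrow> real"
  assumes wni: "white_noise_integral M W"
    and gm: "\<And>t x. t \<ge> 0 \<Longrightarrow> g t x \<in> borel_measurable M"
    and gW: "\<And>t x. t \<ge> 0 \<Longrightarrow> AE \<omega> in M. g t x \<omega> = W (heat_integrand t x) \<omega>"
begin

lemma ps: "prob_space M" using wni by (simp add: white_noise_integral_def)

sublocale prob_space M by (rule ps)

lemma Wm: "wn_integrand f \<Longrightarrow> W f \<in> borel_measurable M"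
  using wni by (simp add: white_noise_integral_def)

lemma Wd: "wn_integrand f \<Longrightarrow> (\<integral>z. (f z)\<^sup>2 \<partial>lborel) > 0 \<Longrightarrow>
   distributed M lborel (W f) (\<lambda>v. ennreal (normal_density 0 (sqrt (\<integral>z. (f z)\<^sup>2 \<partial>lborel)) v))"
  using wni by (simp add: white_noise_integral_def)

lemma W0: "wn_integrand f \<Longrightarrow> (\<integral>z. (f z)\<^sup>2 \<partial>lborel) = 0 \<Longrightarrow> AE \<omega> in M. W f \<omega> = 0"
  using wni by (simp add: white_noise_integral_def)

lemma Wlin: "wn_integrand f \<Longrightarrow> wn_integrand h \<Longrightarrow>
   AE \<omega> in M. W (\<lambda>z. c * f z + d * h z) \<omega> = c * W f \<omega> + d * W h \<omega>"
  using wni unfolding white_noise_integral_def by blast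

lemma sq_nonneg_int: "(\<integral>z. (f z)\<^sup>2 \<partial>lborel) \<ge> (0::real)"
  by (rule integral_nonneg_AE) auto

lemma TAIL:
  assumes f: "wn_integrand f" and B: "(\<integral>z. (f z)\<^sup>2 \<partial>lborel) \<le> B" "0 < B" and a: "0 \<le> a"
  shows "prob {\<omega> \<in> space M. a \<le> \<bar>W f \<omega>\<bar>} \<le> 2 * exp (- a\<^sup>2 / (2 * B))"
proof -
  define V where "V = (\<integral>z. (f z)\<^sup>2 \<partial>lborel)"
  have V0: "V \<ge> 0" unfolding V_def by (rule sq_nonneg_int)
  have [measurable]: "W f \<in> borel_measurable M" using Wm[OF f] .
  show ?thesis
  proof (cases "V = 0")
    case True
    then have ae: "AE \<omega> in M. W f \<omega> = 0" using W0[OF f] by (simp add: V_def)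
    show ?thesis
    proof (cases "a = 0")
      case True
      have "prob {\<omega> \<in> space M. a \<le> \<bar>W f \<omega>\<bar>} \<le> 1" by simp
      also have "\<dots> \<le> 2 * exp (- a\<^sup>2 / (2 * B))" using True by simp
      finally show ?thesis .
    next
      case False
      then have "a > 0" using a by simp
      have "prob {\<omega> \<in> space M. a \<le> \<bar>W f \<omega>\<bar>} = prob {}"
        by (rule measure_eq_AE) (use ae \<open>a > 0\<close> in auto)
      then show ?thesis by simp
    qed
  next
    case False
    then have Vp: "V > 0" using V0 by simp
    define \<sigma> where "\<sigma> = sqrt V"
    have \<sigma>p: "\<sigma> > 0" using Vp by (simp add: \<sigma>_def)
    have \<sigma>2: "\<sigma>\<^sup>2 = V" using V0 by (simp add: \<sigma>_def)
    have D: "distributed M lborel (W f) (\<lambda>v. ennreal (normal_density 0 \<sigma> v))"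
      using Wd[OF f] Vp by (simp add: V_def \<sigma>_def)
    have "prob {\<omega> \<in> space M. a \<le> \<bar>W f \<omega>\<bar>} = (\<integral>\<omega>. indicator {v. a \<le> \<bar>v\<bar>} (W f \<omega>) \<partial>M)"
    proof -
      have "(\<integral>\<omega>. indicator {v. a \<le> \<bar>v\<bar>} (W f \<omega>) \<partial>M) = (\<integral>\<omega>. indicator {\<omega> \<in> space M. a \<le> \<bar>W f \<omega>\<bar>} \<omega> \<partial>M)"
        by (rule Bochner_Integration.integral_cong) (auto simp: indicator_def)
      also have "\<dots> = prob {\<omega> \<in> space M. a \<le> \<bar>W f \<omega>\<bar>}"
        by (simp add: Int_absorb2 subset_iff)
      finally show ?thesis ..
    qed
    also have "\<dots> = (\<integral>v. normal_density 0 \<sigma> v * indicator {v. a \<le> \<bar>v\<bar>} v \<partial>lborel)"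
      by (rule distributed_integral[OF D, symmetric]) auto
    also have "\<dots> \<le> 2 * exp (- a\<^sup>2 / (2 * \<sigma>\<^sup>2))" by (rule nd_tail[OF \<sigma>p a])
    also have "\<dots> \<le> 2 * exp (- a\<^sup>2 / (2 * B))"
    proof -
      have "a\<^sup>2 / (2 * B) \<le> a\<^sup>2 / (2 * V)"
        using Vp B unfolding V_def[symmetric] by (intro divide_left_mono) auto
      then show ?thesis unfolding \<sigma>2 by simp
    qed
    finally show ?thesis .
  qed
qed

lemma MGF:
  assumes f: "wn_integrand f" and Vp: "(\<integral>z. (f z)\<^sup>2 \<partial>lborel) > 0"
  shows "integrable M (\<lambda>\<omega>. exp (l * W f \<omega> + c))"
    and "expectation (\<lambda>\<omega>. exp (l * W f \<omega> + c)) = exp (l\<^sup>2 * (\<integral>z. (f z)\<^sup>2 \<partial>lborel) / 2 + c)"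
proof -
  define V where "V = (\<integral>z. (f z)\<^sup>2 \<partial>lborel)"
  define \<sigma> where "\<sigma> = sqrt V"
  have \<sigma>p: "\<sigma> > 0" using Vp by (simp add: \<sigma>_def V_def)
  have \<sigma>2: "\<sigma>\<^sup>2 = V" using Vp by (simp add: \<sigma>_def V_def)
  have D: "distributed M lborel (W f) (\<lambda>v. ennreal (normal_density 0 \<sigma> v))"
    using Wd[OF f] Vp by (simp add: V_def \<sigma>_def)
  show "integrable M (\<lambda>\<omega>. exp (l * W f \<omega> + c))"
    using distributed_integrable[OF D, of "\<lambda>v. exp (l * v + c)"] nd_mgf(1)[OF \<sigma>p, of l c] by simp
  have "expectation (\<lambda>\<omega>. exp (l * W f \<omega> + c)) = (\<integral>v. normal_density 0 \<sigma> v * exp (l * v + c) \<partial>lborel)"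
    by (rule distributed_integral[OF D, symmetric]) auto
  also have "\<dots> = exp (l\<^sup>2 * \<sigma>\<^sup>2 / 2 + c)" by (rule nd_mgf(2)[OF \<sigma>p])
  finally show "expectation (\<lambda>\<omega>. exp (l * W f \<omega> + c)) = exp (l\<^sup>2 * (\<integral>z. (f z)\<^sup>2 \<partial>lborel) / 2 + c)"
    unfolding \<sigma>2 V_def .
qed

lemma gcomb:
  assumes t: "t \<ge> 0" and s: "s \<ge> 0"
  shows "AE \<omega> in M. c * g t x \<omega> + d * g s y \<omega> = W (\<lambda>z. c * heat_integrand t x z + d * heat_integrand s y z) \<omega>"
  using gW[OF t, of x] gW[OF s, of y] Wlin[OF wn_F[OF t, of x] wn_F[OF s, of y], of c d] by eventually_elim simp

lemma PD:
  assumes t: "t \<ge> 0" and s: "s \<ge> 0"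
    and B: "(\<integral>z. (heat_integrand t x z - heat_integrand s y z)\<^sup>2 \<partial>lborel) \<le> B" "0 < B" and a: "0 \<le> a"
  shows "prob {\<omega> \<in> space M. a \<le> \<bar>g t x \<omega> - g s y \<omega>\<bar>} \<le> 2 * exp (- a\<^sup>2 / (2 * B))"
proof -
  define h where "h = (\<lambda>z. 1 * heat_integrand t x z + (-1) * heat_integrand s y z)"
  have wh: "wn_integrand h" unfolding h_def by (intro wn_lin wn_F t s)
  have [measurable]: "W h \<in> borel_measurable M" "g t x \<in> borel_measurable M" "g s y \<in> borel_measurable M"
    using Wm[OF wh] gm[OF t] gm[OF s] by auto
  have "prob {\<omega> \<in> space M. a \<le> \<bar>g t x \<omega> - g s y \<omega>\<bar>} = prob {\<omega> \<in> space M. a \<le> \<bar>W h \<omega>\<bar>}"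
  proof -
    have "AE \<omega> in M. g t x \<omega> - g s y \<omega> = W h \<omega>"
      using gcomb[OF t s, of 1 x "-1" y] unfolding h_def by simp
    then show ?thesis by (intro measure_eq_AE) auto
  qed
  also have "\<dots> \<le> 2 * exp (- a\<^sup>2 / (2 * B))"
    by (rule TAIL[OF wh _ B(2) a]) (use B(1) in \<open>simp add: h_def\<close>)
  finally show ?thesis .
qed

end

definition QQ :: "nat \<Rightarrow> real" where "QQ n = 2 ^ (n + 1)"
definition TT :: "nat \<Rightarrow> real" where "TT n = (QQ n)^4"
definition vv :: "nat \<Rightarrow> real" where "vv n = (QQ n)\<^sup>2 / sqrt (2 * pi)"
definition ss :: "nat \<Rightarrow> real" where "ss n = sqrt (vv n)"
definition ff :: "nat \<Rightarrow> real \<times> real \<Rightarrow> real" where "ff n = heat_integrand (TT n) 0"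
definition rho :: "nat \<Rightarrow> nat \<Rightarrow> real" where
  "rho a b = (\<integral>z. ff a z * ff b z \<partial>lborel) / (ss a * ss b)"

lemma sqrt_pow4: "sqrt ((x::real)^4) = x\<^sup>2"
proof -
  have e: "x^4 = (x\<^sup>2)\<^sup>2" by (simp only: power_mult[symmetric]) simp
  have "sqrt (x^4) = sqrt ((x\<^sup>2)\<^sup>2)" by (simp only: e)
  also have "\<dots> = \<bar>x\<^sup>2\<bar>" by (rule real_sqrt_abs)
  finally show ?thesis by simp
qed

lemma QQ_pos: "QQ n > 0" by (simp add: QQ_def)
lemma TT_pos: "TT n > 0" using QQ_pos[of n] by (simp add: TT_def)
lemma TT_nonneg: "TT n \<ge> 0" using TT_pos less_imp_le by blast
lemma sqrt_TT: "sqrt (TT n) = (QQ n)\<^sup>2"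
  by (simp add: TT_def sqrt_pow4)
lemma vv_pos: "vv n > 0" using QQ_pos[of n] by (simp add: vv_def)
lemma ss_pos: "ss n > 0" by (simp add: ss_def vv_pos)
lemma ss_sq: "(ss n)\<^sup>2 = vv n" using vv_pos by (simp add: ss_def less_imp_le)
lemma vv_eq: "(\<integral>z. (ff n z)\<^sup>2 \<partial>lborel) = vv n"
  by (simp add: ff_def F_sq_val[OF TT_nonneg] sqrt_TT vv_def)
lemma ss_mult: "ss a * ss b = QQ a * QQ b / sqrt (2 * pi)"
proof -
  have "ss a * ss b = sqrt (vv a * vv b)" by (simp add: ss_def real_sqrt_mult)
  also have "vv a * vv b = (QQ a * QQ b)\<^sup>2 / (sqrt (2 * pi))\<^sup>2"
    by (simp add: vv_def power_mult_distrib power2_eq_square)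
  also have "sqrt \<dots> = QQ a * QQ b / sqrt (2 * pi)"
    using QQ_pos[of a] QQ_pos[of b] by (simp add: real_sqrt_divide)
  finally show ?thesis .
qed

lemma ip_nonneg: "(\<integral>z. ff a z * ff b z \<partial>lborel) \<ge> 0"
  by (rule integral_nonneg_AE) (auto simp: ff_def hi_nonneg)

lemma rho_nonneg: "rho a b \<ge> 0"
  using ip_nonneg[of a b] ss_pos[of a] ss_pos[of b] by (simp add: rho_def)

lemma rho_sym: "rho a b = rho b a"
  by (simp add: rho_def mult.commute)

lemma rho_diag: "rho a a = 1"
proof -
  have "(\<integral>z. ff a z * ff a z \<partial>lborel) = vv a" using vv_eq[of a] by (simp add: power2_eq_square)
  then show ?thesis using ss_sq[of a] vv_pos[of a] by (simp add: rho_def power2_eq_square)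
qed

lemma rho_far:
  assumes ab: "a + D \<le> b" and D: "D > 0"
  shows "rho a b \<le> 1 / 2 ^ D"
proof -
  define A where "A = QQ a"
  define B where "B = QQ b"
  have A0: "A > 0" and B0: "B > 0" by (simp_all add: A_def B_def QQ_pos)
  have ab': "a < b" using ab D by simp
  have BA: "B = 2 ^ (b - a) * A"
    unfolding A_def B_def QQ_def using ab' by (simp add: power_add[symmetric])
  have BA2: "2 * A \<le> B"
  proof -
    have "(2::real) \<le> 2 ^ (b - a)" using power_increasing[of 1 "b-a" "2::real"] ab' by simp
    then show ?thesis unfolding BA using A0 by (intro mult_right_mono) auto
  qed
  have Ta: "TT a = A^4" and Tb: "TT b = B^4" by (simp_all add: TT_def A_def B_def)
  have TT_lt: "TT a < TT b"
    unfolding Ta Tb using A0 BA2 by (intro power_strict_mono) auto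
  have ip: "(\<integral>z. ff a z * ff b z \<partial>lborel) \<le> A^4 / sqrt (4 * pi * (B^4 - A^4))"
    using ip_far[OF TT_nonneg TT_lt] by (simp add: ff_def Ta Tb)
  have A4: "A^4 \<le> B^4 / 2"
  proof -
    have "(2 * A)^4 \<le> B^4" using BA2 A0 by (intro power_mono) auto
    then have "16 * A^4 \<le> B^4" by (simp add: power_mult_distrib)
    moreover have "A^4 \<ge> 0" using A0 by simp
    ultimately show ?thesis by linarith
  qed
  have sq: "sqrt (2 * pi) * B\<^sup>2 \<le> sqrt (4 * pi * (B^4 - A^4))"
  proof -
    have "sqrt (2 * pi) * B\<^sup>2 = sqrt (2 * pi * B^4)"
      by (simp add: real_sqrt_mult sqrt_pow4)
    also have "\<dots> \<le> sqrt (4 * pi * (B^4 - A^4))"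
      using A4 by (intro real_sqrt_le_mono) (simp add: algebra_simps)
    finally show ?thesis .
  qed
  have pos: "0 < sqrt (2 * pi) * B\<^sup>2" using B0 by simp
  have "rho a b \<le> (A^4 / sqrt (4 * pi * (B^4 - A^4))) / (A * B / sqrt (2 * pi))"
    unfolding rho_def ss_mult A_def[symmetric] B_def[symmetric]
    using ip A0 B0 by (intro divide_right_mono) auto
  also have "\<dots> \<le> (A^4 / (sqrt (2 * pi) * B\<^sup>2)) / (A * B / sqrt (2 * pi))"
  proof -
    have p2: "0 < sqrt (4 * pi * (B^4 - A^4))" using sq pos by linarith
    have p3: "0 < sqrt (4 * pi * (B^4 - A^4)) * (sqrt (2 * pi) * B\<^sup>2)" using p2 pos by simp
    show ?thesis using sq pos p3 A0 B0 by (intro divide_right_mono divide_left_mono) auto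
  qed
  also have "\<dots> = A^3 / B^3"
    using A0 B0 by (simp add: divide_simps) (simp add: power2_eq_square power3_eq_cube power4_eq_xxxx)
  also have "\<dots> \<le> A / B"
  proof -
    have "A^3 / B^3 = (A / B) * (A / B)\<^sup>2" by (simp add: power_divide power2_eq_square power3_eq_cube)
    also have "\<dots> \<le> (A / B) * 1"
      using A0 B0 BA2 by (intro mult_left_mono) (auto simp: power_le_one)
    finally show ?thesis by simp
  qed
  also have "A / B = 1 / 2 ^ (b - a)" unfolding BA using A0 by simp
  also have "\<dots> \<le> 1 / 2 ^ D" using ab by (intro divide_left_mono power_increasing) auto
  finally show ?thesis .
qed

context setting begin

definition Y :: "nat \<Rightarrow> 'a \<Rightarrow> real" where "Y n \<omega> = exp (2 * (g (TT n) 0 \<omega> / ss n) - 2)"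

lemma Ym[measurable]: "Y n \<in> borel_measurable M"
  using gm[OF TT_nonneg, of n 0] unfolding Y_def by measurable

lemma wn_ff: "wn_integrand (ff n)" unfolding ff_def by (rule wn_F[OF TT_nonneg])

lemma ff_sq_int: "integrable lborel (\<lambda>z. (ff n z)\<^sup>2)"
  unfolding ff_def by (rule F_sq_int[OF TT_nonneg])

lemma ff_prod_int: "integrable lborel (\<lambda>z. ff a z * ff b z)"
  unfolding ff_def by (rule F_prod_int[OF TT_nonneg TT_nonneg])

lemma Q_val: "(\<integral>z. ((1 / ss a) * ff a z + (1 / ss b) * ff b z)\<^sup>2 \<partial>lborel) = 2 + 2 * rho a b"
proof -
  have "(\<integral>z. ((1 / ss a) * ff a z + (1 / ss b) * ff b z)\<^sup>2 \<partial>lborel)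
     = (1 / ss a)\<^sup>2 * vv a + 2 * (1 / ss a) * (1 / ss b) * (\<integral>z. ff a z * ff b z \<partial>lborel) + (1 / ss b)\<^sup>2 * vv b"
    using sq_expand[OF ff_sq_int[of a] ff_sq_int[of b] ff_prod_int[of a b], where c="1 / ss a" and d="1 / ss b"]
    by (simp add: vv_eq)
  also have "\<dots> = 2 + 2 * rho a b"
    using ss_sq[of a] ss_sq[of b] ss_pos[of a] ss_pos[of b] vv_pos[of a] vv_pos[of b]
    by (simp add: rho_def power_divide field_simps)
  finally show ?thesis .
qed

lemma EYY:
  shows "integrable M (\<lambda>\<omega>. Y a \<omega> * Y b \<omega>)"
    and "expectation (\<lambda>\<omega>. Y a \<omega> * Y b \<omega>) = exp (4 * rho a b)"
proof -
  define h where "h = (\<lambda>z. (1 / ss a) * ff a z + (1 / ss b) * ff b z)"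
  have wh: "wn_integrand h" unfolding h_def by (intro wn_lin wn_ff)
  have Q: "(\<integral>z. (h z)\<^sup>2 \<partial>lborel) = 2 + 2 * rho a b" unfolding h_def by (rule Q_val)
  have Qp: "(\<integral>z. (h z)\<^sup>2 \<partial>lborel) > 0" unfolding Q using rho_nonneg[of a b] by simp
  have ae: "AE \<omega> in M. Y a \<omega> * Y b \<omega> = exp (2 * W h \<omega> + (-4))"
    using gcomb[OF TT_nonneg TT_nonneg, of "1 / ss a" a 0 "1 / ss b" b 0]
  proof eventually_elim
    case (elim \<omega>)
    have "Y a \<omega> * Y b \<omega> = exp (2 * ((1 / ss a) * g (TT a) 0 \<omega> + (1 / ss b) * g (TT b) 0 \<omega>) + (-4))"
      by (simp add: Y_def exp_add[symmetric] algebra_simps)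
    also have "\<dots> = exp (2 * W h \<omega> + (-4))" using elim by (simp add: h_def ff_def)
    finally show ?case .
  qed
  have [measurable]: "W h \<in> borel_measurable M" by (rule Wm[OF wh])
  show "integrable M (\<lambda>\<omega>. Y a \<omega> * Y b \<omega>)"
    using MGF(1)[OF wh Qp, of 2 "-4"] ae by (subst integrable_cong_AE[OF _ _ ae]) auto
  have "expectation (\<lambda>\<omega>. Y a \<omega> * Y b \<omega>) = expectation (\<lambda>\<omega>. exp (2 * W h \<omega> + (-4)))"
    by (rule integral_cong_AE) (use ae in auto)
  also have "\<dots> = exp (2\<^sup>2 * (2 + 2 * rho a b) / 2 + (-4))"
    using MGF(2)[OF wh Qp, of 2 "-4"] unfolding Q .
  also have "\<dots> = exp (4 * rho a b)" by (simp add: algebra_simps)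
  finally show "expectation (\<lambda>\<omega>. Y a \<omega> * Y b \<omega>) = exp (4 * rho a b)" .
qed

lemma EY:
  shows "integrable M (Y a)" and "expectation (Y a) = 1"
proof -
  define h where "h = (\<lambda>z. (1 / ss a) * ff a z + 0 * ff a z)"
  have wh: "wn_integrand h" unfolding h_def by (intro wn_lin wn_ff)
  have Q: "(\<integral>z. (h z)\<^sup>2 \<partial>lborel) = 1"
    using vv_eq[of a] ss_sq[of a] ss_pos[of a] vv_pos[of a] by (simp add: h_def power_mult_distrib power_divide)
  have Qp: "(\<integral>z. (h z)\<^sup>2 \<partial>lborel) > 0" unfolding Q by simp
  have ae: "AE \<omega> in M. Y a \<omega> = exp (2 * W h \<omega> + (-2))"
    using gcomb[OF TT_nonneg TT_nonneg, of "1 / ss a" a 0 0 a 0]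
  proof eventually_elim
    case (elim \<omega>)
    have "Y a \<omega> = exp (2 * ((1 / ss a) * g (TT a) 0 \<omega> + 0 * g (TT a) 0 \<omega>) + (-2))"
      by (simp add: Y_def)
    also have "\<dots> = exp (2 * W h \<omega> + (-2))" using elim by (simp add: h_def ff_def)
    finally show ?case .
  qed
  have [measurable]: "W h \<in> borel_measurable M" by (rule Wm[OF wh])
  show "integrable M (Y a)"
    using MGF(1)[OF wh Qp, of 2 "-2"] by (subst integrable_cong_AE[OF _ _ ae]) auto
  have "expectation (Y a) = expectation (\<lambda>\<omega>. exp (2 * W h \<omega> + (-2)))"
    by (rule integral_cong_AE) (use ae in auto)
  also have "\<dots> = exp (2\<^sup>2 * 1 / 2 + (-2))"
    using MGF(2)[OF wh Qp, of 2 "-2"] unfolding Q .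
  also have "\<dots> = 1" by simp
  finally show "expectation (Y a) = 1" .
qed

lemma E_cross:
  shows "integrable M (\<lambda>\<omega>. (Y a \<omega> - 1) * (Y b \<omega> - 1))"
    and "expectation (\<lambda>\<omega>. (Y a \<omega> - 1) * (Y b \<omega> - 1)) = exp (4 * rho a b) - 1"
proof -
  have e: "(\<lambda>\<omega>. (Y a \<omega> - 1) * (Y b \<omega> - 1)) = (\<lambda>\<omega>. Y a \<omega> * Y b \<omega> - Y a \<omega> - Y b \<omega> + 1)"
    by (rule ext) (simp add: algebra_simps)
  show "integrable M (\<lambda>\<omega>. (Y a \<omega> - 1) * (Y b \<omega> - 1))"
    unfolding e using EYY(1)[of a b] EY(1)[of a] EY(1)[of b] by auto
  show "expectation (\<lambda>\<omega>. (Y a \<omega> - 1) * (Y b \<omega> - 1)) = exp (4 * rho a b) - 1"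
    unfolding e using EYY[of a b] EY[of a] EY[of b] by (simp add: prob_space)
qed

end

context setting begin

lemma gTm[measurable]: "g (TT n) x \<in> borel_measurable M"
  by (rule gm[OF TT_nonneg])

lemma exp_small: "D \<ge> 3 \<Longrightarrow> exp (4 / 2 ^ D :: real) \<le> 1 + 8 / 2 ^ D"
proof -
  assume D: "D \<ge> 3"
  have "(2::real) ^ 3 \<le> 2 ^ D" using D by (intro power_increasing) auto
  then have h: "4 / 2 ^ D \<le> (1/2::real)" by (simp add: divide_simps)
  have "norm (exp (4 / 2 ^ D :: real)) \<le> 1 + 2 * norm (4 / 2 ^ D :: real)"
    by (rule exp_bound_lemma) (use h in simp)
  then show ?thesis by simp
qed

lemma cross_bound:
  assumes D: "D \<ge> 3" and i: "i < N" and l: "l < N"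
  shows "expectation (\<lambda>\<omega>. (Y (K + i * D) \<omega> - 1) * (Y (K + l * D) \<omega> - 1))
     \<le> (if i = l then exp 4 else 0) + 8 / 2 ^ D"
proof (cases "i = l")
  case True
  have "8 / 2 ^ D \<ge> (0::real)" by simp
  moreover have "expectation (\<lambda>\<omega>. (Y (K + i * D) \<omega> - 1) * (Y (K + l * D) \<omega> - 1)) = exp 4 - 1"
    using True E_cross(2)[of "K + i * D" "K + l * D"] by (simp add: rho_diag)
  moreover have "(if i = l then exp 4 else 0) = (exp 4 :: real)" using True by simp
  ultimately show ?thesis by linarith
next
  case False
  have D0: "D > 0" using D by simp
  have "rho (K + i * D) (K + l * D) \<le> 1 / 2 ^ D"
  proof (cases "i < l")
    case True
    then have "Suc i * D \<le> l * D" by (intro mult_le_mono1) simp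
    then have "K + i * D + D \<le> K + l * D" by simp
    then show ?thesis by (rule rho_far[OF _ D0])
  next
    case False
    then have "l < i" using \<open>i \<noteq> l\<close> by simp
    then have "Suc l * D \<le> i * D" by (intro mult_le_mono1) simp
    then have "K + l * D + D \<le> K + i * D" by simp
    then have "rho (K + l * D) (K + i * D) \<le> 1 / 2 ^ D" by (rule rho_far[OF _ D0])
    then show ?thesis by (simp add: rho_sym)
  qed
  then have "exp (4 * rho (K + i * D) (K + l * D)) \<le> exp (4 / 2 ^ D)" by simp
  also have "\<dots> \<le> 1 + 8 / 2 ^ D" by (rule exp_small[OF D])
  finally show ?thesis using False E_cross(2)[of "K + i * D" "K + l * D"] by simp
qed

lemma EK_bound:
  assumes D: "D \<ge> 3"
  shows "prob {\<omega> \<in> space M. \<forall>n\<ge>K. g (TT n) 0 \<omega> / ss n \<le> 1/2} \<le> 4 * (exp 4 + 8) / 2 ^ D"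
proof -
  define N :: nat where "N = 2 ^ D"
  have Npos: "real N > 0" by (simp add: N_def)
  define S where "S \<omega> = (\<Sum>i<N. (Y (K + i * D) \<omega> - 1))" for \<omega>
  have Sm[measurable]: "S \<in> borel_measurable M" unfolding S_def by measurable
  have S2: "(S \<omega>)\<^sup>2 = (\<Sum>i<N. \<Sum>l<N. (Y (K + i * D) \<omega> - 1) * (Y (K + l * D) \<omega> - 1))" for \<omega>
    unfolding S_def power2_eq_square by (rule sum_product)
  have int2: "integrable M (\<lambda>\<omega>. (S \<omega>)\<^sup>2)"
    unfolding S2 by (intro Bochner_Integration.integrable_sum E_cross(1))
  have ES2: "expectation (\<lambda>\<omega>. (S \<omega>)\<^sup>2) \<le> real N * exp 4 + (real N)\<^sup>2 * (8 / 2 ^ D)"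
  proof -
    have "expectation (\<lambda>\<omega>. (S \<omega>)\<^sup>2)
        = (\<Sum>i<N. \<Sum>l<N. expectation (\<lambda>\<omega>. (Y (K + i * D) \<omega> - 1) * (Y (K + l * D) \<omega> - 1)))"
      unfolding S2 by (simp add: Bochner_Integration.integral_sum E_cross(1) Bochner_Integration.integrable_sum)
    also have "\<dots> \<le> (\<Sum>i<N. \<Sum>l<N. (if i = l then exp 4 else 0) + 8 / 2 ^ D)"
      by (intro sum_mono cross_bound[OF D]) auto
    also have "\<dots> = (\<Sum>i<N. exp 4 + real N * (8 / 2 ^ D))"
      by (simp add: sum.distrib)
    also have "\<dots> = real N * exp 4 + (real N)\<^sup>2 * (8 / 2 ^ D)"
      by (simp add: power2_eq_square algebra_simps)
    finally show ?thesis .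
  qed
  have sub: "{\<omega> \<in> space M. \<forall>n\<ge>K. g (TT n) 0 \<omega> / ss n \<le> 1/2} \<subseteq> {\<omega> \<in> space M. (real N)\<^sup>2 / 4 \<le> (S \<omega>)\<^sup>2}"
  proof safe
    fix \<omega> assume \<omega>: "\<omega> \<in> space M" and H: "\<forall>n\<ge>K. g (TT n) 0 \<omega> / ss n \<le> 1/2"
    have e1: "exp (-1::real) \<le> 1/2"
    proof -
      have "2 \<le> exp (1::real)" using exp_ge_add_one_self[of 1] by simp
      then show ?thesis by (simp add: exp_minus divide_simps)
    qed
    have Yle: "Y (K + i * D) \<omega> - 1 \<le> - 1/2" for i
    proof -
      have "g (TT (K + i * D)) 0 \<omega> / ss (K + i * D) \<le> 1/2" using H by simp
      then have "2 * (g (TT (K + i * D)) 0 \<omega> / ss (K + i * D)) - 2 \<le> -1" by linarith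
      then have "Y (K + i * D) \<omega> \<le> exp (-1)" unfolding Y_def by simp
      then show ?thesis using e1 by simp
    qed
    have "S \<omega> \<le> (\<Sum>i<N. - 1/2)" unfolding S_def by (intro sum_mono Yle)
    then have "S \<omega> \<le> - real N / 2" by simp
    then have "(real N / 2)\<^sup>2 \<le> (S \<omega>)\<^sup>2"
      using Npos by (intro power_mono[of "real N / 2" "- S \<omega>" 2, simplified]) auto
    then show "(real N)\<^sup>2 / 4 \<le> (S \<omega>)\<^sup>2" by (simp add: power_divide)
  qed
  have "prob {\<omega> \<in> space M. \<forall>n\<ge>K. g (TT n) 0 \<omega> / ss n \<le> 1/2} \<le> prob {\<omega> \<in> space M. (real N)\<^sup>2 / 4 \<le> (S \<omega>)\<^sup>2}"
    by (rule finite_measure_mono[OF sub]) measurable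
  also have "\<dots> \<le> expectation (\<lambda>\<omega>. (S \<omega>)\<^sup>2) / ((real N)\<^sup>2 / 4)"
    by (rule integral_Markov_inequality_measure[OF int2]) (use Npos in auto)
  also have "\<dots> \<le> (real N * exp 4 + (real N)\<^sup>2 * (8 / 2 ^ D)) / ((real N)\<^sup>2 / 4)"
    using Npos ES2 by (intro divide_right_mono) auto
  also have "\<dots> = 4 * (exp 4 + 8) / 2 ^ D"
    using Npos by (simp add: N_def field_simps power2_eq_square)
  finally show ?thesis .
qed

lemma EK_null: "prob {\<omega> \<in> space M. \<forall>n\<ge>K. g (TT n) 0 \<omega> / ss n \<le> 1/2} = 0"
proof (rule ccontr)
  define p where "p = prob {\<omega> \<in> space M. \<forall>n\<ge>K. g (TT n) 0 \<omega> / ss n \<le> 1/2}"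
  assume "prob {\<omega> \<in> space M. \<forall>n\<ge>K. g (TT n) 0 \<omega> / ss n \<le> 1/2} \<noteq> 0"
  then have p: "p > 0" unfolding p_def using measure_nonneg[of M] by (simp add: order_less_le)
  obtain n where n: "4 * (exp 4 + 8) / p < (2::real) ^ n" using real_arch_pow[of 2] by auto
  define D where "D = max n 3"
  have "(2::real) ^ n \<le> 2 ^ D" unfolding D_def by (intro power_increasing) auto
  with n have "4 * (exp 4 + 8) / p < 2 ^ D" by (rule less_le_trans)
  then have "4 * (exp 4 + 8) / 2 ^ D < p" using p by (simp add: divide_simps mult.commute)
  moreover have "p \<le> 4 * (exp 4 + 8) / 2 ^ D" unfolding p_def by (rule EK_bound) (simp add: D_def)
  ultimately show False by simp
qed

end

definition aa :: "nat \<Rightarrow> nat \<Rightarrow> real" where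
  "aa n L = sqrt (32 * QQ n * (real n + 16)) * (3/4)^L"
definition gt :: "nat \<Rightarrow> nat \<Rightarrow> nat \<Rightarrow> real" where
  "gt n L i = TT n + real i / 16^L"
definition gx :: "nat \<Rightarrow> nat \<Rightarrow> real" where
  "gx L j = real j / 16^L"

lemma gt_nonneg: "gt n L i \<ge> 0" using TT_nonneg[of n] by (simp add: gt_def)

lemma div16_le: "real (i div 16) / 16 ^ k \<le> real i / 16 ^ Suc k"
proof -
  have "16 * (i div 16) \<le> i" by simp
  then have "16 * real (i div 16) \<le> real i" by (metis of_nat_le_iff of_nat_mult of_nat_numeral)
  then show ?thesis by (simp add: divide_simps)
qed

lemma div16_diff: "real i / 16 ^ Suc k - real (i div 16) / 16 ^ k \<le> 1 / 16 ^ k"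
proof -
  have "i < 16 * (i div 16) + 16" by simp
  then have "real i \<le> 16 * real (i div 16) + 16" by linarith
  then show ?thesis by (simp add: divide_simps)
qed

lemma sqrt_16pow: "sqrt (1 / 16 ^ k) = 4 / 4 ^ Suc k"
proof -
  have "(4::real) ^ k * 4 ^ k = (4 * 4) ^ k" by (rule power_mult_distrib[symmetric])
  then have "(16::real) ^ k = (4 ^ k)\<^sup>2" by (simp add: power2_eq_square)
  then show ?thesis by (simp add: real_sqrt_divide)
qed

lemma gt_le: "i < 16 ^ L \<Longrightarrow> gt n L i \<le> TT n + 1"
proof -
  assume "i < 16 ^ L"
  then have r: "real i < 16 ^ L" by (metis of_nat_less_iff of_nat_numeral of_nat_power)
  have pos: "(0::real) < 16^L" by simp
  from r pos have "real i / 16^L < 1" by (simp only: divide_less_eq_1_pos)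
  then show ?thesis unfolding gt_def by linarith
qed

lemma QQ_ge2: "QQ n \<ge> 2"
proof -
  have "(2::real) ^ 1 \<le> 2 ^ (n+1)" by (intro power_increasing) auto
  then show ?thesis by (simp add: QQ_def)
qed

lemma quarter_bound: "0 \<le> t \<Longrightarrow> t \<le> TT n + 1 \<Longrightarrow> t powr (1/4) \<le> 2 * QQ n"
proof -
  assume t: "0 \<le> t" "t \<le> TT n + 1"
  have "1 \<le> QQ n ^ 4" using QQ_ge2[of n] by (intro one_le_power) simp
  then have "TT n + 1 \<le> (2 * QQ n)^4" by (simp add: TT_def power_mult_distrib)
  then have "t \<le> (2 * QQ n)^4" using t by simp
  then have "t powr (1/4) \<le> ((2 * QQ n)^4) powr (1/4)" using t by (intro powr_mono2) auto
  also have "((2 * QQ n)^4) powr (1/4) = 2 * QQ n"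
  proof -
    have p: "(2 * QQ n)^4 = (2 * QQ n) powr 4" using QQ_pos[of n] by (subst powr_numeral) auto
    have "((2 * QQ n) powr 4) powr (1/4) = (2 * QQ n) powr (4 * (1/4))" by (rule powr_powr)
    also have "\<dots> = 2 * QQ n" using QQ_pos[of n] by simp
    finally show ?thesis unfolding p .
  qed
  finally show ?thesis .
qed

lemma VT:
  "(\<integral>z. (heat_integrand (gt n (Suc k) i) x z - heat_integrand (gt n k (i div 16)) x z)\<^sup>2 \<partial>lborel)
     \<le> 16 * QQ n / 4 ^ Suc k"
proof -
  have le: "gt n k (i div 16) \<le> gt n (Suc k) i" using div16_le[of i k] by (simp add: gt_def)
  have "(\<integral>z. (heat_integrand (gt n (Suc k) i) x z - heat_integrand (gt n k (i div 16)) x z)\<^sup>2 \<partial>lborel)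
      \<le> sqrt (gt n (Suc k) i - gt n k (i div 16))" by (rule V_temp[OF gt_nonneg le])
  also have "\<dots> \<le> sqrt (1 / 16 ^ k)" using div16_diff[of i k] by (simp add: gt_def)
  also have "\<dots> = 4 / 4 ^ Suc k" by (rule sqrt_16pow)
  also have "\<dots> \<le> 16 * QQ n / 4 ^ Suc k" using QQ_ge2[of n] by (intro divide_right_mono) auto
  finally show ?thesis .
qed

lemma VS:
  assumes i: "i < 16 ^ Suc k"
  shows "(\<integral>z. (heat_integrand (gt n k (i div 16)) (gx (Suc k) j) z - heat_integrand (gt n k (i div 16)) (gx k (j div 16)) z)\<^sup>2 \<partial>lborel)
     \<le> 16 * QQ n / 4 ^ Suc k"
proof -
  have i': "i div 16 < 16 ^ k" using i by (simp add: less_mult_imp_div_less mult.commute)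
  have "(\<integral>z. (heat_integrand (gt n k (i div 16)) (gx (Suc k) j) z - heat_integrand (gt n k (i div 16)) (gx k (j div 16)) z)\<^sup>2 \<partial>lborel)
      \<le> 2 * sqrt \<bar>gx (Suc k) j - gx k (j div 16)\<bar> * (gt n k (i div 16)) powr (1/4)"
    by (rule V_space[OF gt_nonneg])
  also have "\<dots> \<le> 2 * (4 / 4 ^ Suc k) * (2 * QQ n)"
  proof (intro mult_mono mult_left_mono)
    have "\<bar>gx (Suc k) j - gx k (j div 16)\<bar> \<le> 1 / 16 ^ k"
      using div16_le[of j k] div16_diff[of j k] by (simp add: gx_def)
    then have "sqrt \<bar>gx (Suc k) j - gx k (j div 16)\<bar> \<le> sqrt (1 / 16 ^ k)" by (rule real_sqrt_le_mono)
    then show "sqrt \<bar>gx (Suc k) j - gx k (j div 16)\<bar> \<le> 4 / 4 ^ Suc k" by (simp only: sqrt_16pow)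
    show "gt n k (i div 16) powr (1/4) \<le> 2 * QQ n"
      by (rule quarter_bound[OF gt_nonneg gt_le[OF i']])
  qed auto
  also have "\<dots> = 16 * QQ n / 4 ^ Suc k" by simp
  finally show ?thesis .
qed

lemma aa_exponent: "(aa n L)\<^sup>2 / (2 * (16 * QQ n / 4 ^ L)) \<ge> (real n + 16) * real L"
proof -
  have Q: "QQ n > 0" by (rule QQ_pos)
  have r: "((3/4::real)^L)\<^sup>2 = (9/16)^L" by (simp add: power2_eq_square power_mult_distrib[symmetric])
  have "(aa n L)\<^sup>2 = (sqrt (32 * QQ n * (real n + 16)))\<^sup>2 * ((3/4::real)^L)\<^sup>2"
    unfolding aa_def by (rule power_mult_distrib)
  also have "\<dots> = 32 * QQ n * (real n + 16) * (9/16)^L" unfolding r using Q by simp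
  finally have "(aa n L)\<^sup>2 = 32 * QQ n * (real n + 16) * (9/16)^L" .
  then have "(aa n L)\<^sup>2 / (2 * (16 * QQ n / 4 ^ L)) = (real n + 16) * ((9/16)^L * 4^L)"
    using Q by (simp add: field_simps)
  also have "(9/16::real)^L * 4^L = (9/4)^L" by (simp flip: power_mult_distrib)
  finally have e: "(aa n L)\<^sup>2 / (2 * (16 * QQ n / 4 ^ L)) = (real n + 16) * (9/4)^L" .
  have "real L \<le> (9/4::real)^L"
  proof (induction L)
    case (Suc L)
    have "(1::real) \<le> (9/4)^L" by (simp add: one_le_power)
    moreover have "(9/4::real)^Suc L = 9/4 * (9/4)^L" by simp
    ultimately show ?case using Suc.IH unfolding of_nat_Suc by linarith
  qed simp
  then show ?thesis unfolding e by (intro mult_left_mono) auto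
qed

context setting begin

definition Bt :: "nat \<Rightarrow> nat \<Rightarrow> nat \<Rightarrow> nat \<Rightarrow> 'a set" where
  "Bt n k i j = {\<omega> \<in> space M. aa n (Suc k) \<le> \<bar>g (gt n (Suc k) i) (gx (Suc k) j) \<omega> - g (gt n k (i div 16)) (gx (Suc k) j) \<omega>\<bar>}"
definition Bs :: "nat \<Rightarrow> nat \<Rightarrow> nat \<Rightarrow> nat \<Rightarrow> 'a set" where
  "Bs n k i j = {\<omega> \<in> space M. aa n (Suc k) \<le> \<bar>g (gt n k (i div 16)) (gx (Suc k) j) \<omega> - g (gt n k (i div 16)) (gx k (j div 16)) \<omega>\<bar>}"
definition BadL :: "nat \<Rightarrow> nat \<Rightarrow> 'a set" where
  "BadL n k = (\<Union>i\<in>{..<16 ^ Suc k}. \<Union>j\<in>{..<16 ^ Suc k}. Bt n k i j \<union> Bs n k i j)"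
definition Bad :: "nat \<Rightarrow> 'a set" where
  "Bad n = (\<Union>k. BadL n k)"

lemma ggm[measurable]: "g (gt n L i) x \<in> borel_measurable M"
  by (rule gm[OF gt_nonneg])

lemma Bt_sets[measurable]: "Bt n k i j \<in> sets M" unfolding Bt_def by measurable
lemma Bs_sets[measurable]: "Bs n k i j \<in> sets M" unfolding Bs_def by measurable
lemma BadL_sets[measurable]: "BadL n k \<in> sets M" unfolding BadL_def by measurable
lemma Bad_sets[measurable]: "Bad n \<in> sets M" unfolding Bad_def by measurable

lemma tail_exp: "2 * exp (- (aa n (Suc k))\<^sup>2 / (2 * (16 * QQ n / 4 ^ Suc k))) \<le> 2 * exp (- ((real n + 16) * real (Suc k)))"
  using aa_exponent[of n "Suc k"] by simp

lemma prob_Bt: "prob (Bt n k i j) \<le> 2 * exp (- ((real n + 16) * real (Suc k)))"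
proof -
  have "prob (Bt n k i j) \<le> 2 * exp (- (aa n (Suc k))\<^sup>2 / (2 * (16 * QQ n / 4 ^ Suc k)))"
    unfolding Bt_def using QQ_pos[of n]
    by (intro PD[OF gt_nonneg gt_nonneg VT]) (auto simp: aa_def)
  then show ?thesis using tail_exp by (rule order.trans)
qed

lemma prob_Bs: "i < 16 ^ Suc k \<Longrightarrow> prob (Bs n k i j) \<le> 2 * exp (- ((real n + 16) * real (Suc k)))"
proof -
  assume i: "i < 16 ^ Suc k"
  have "prob (Bs n k i j) \<le> 2 * exp (- (aa n (Suc k))\<^sup>2 / (2 * (16 * QQ n / 4 ^ Suc k)))"
    unfolding Bs_def using QQ_pos[of n]
    by (intro PD[OF gt_nonneg gt_nonneg VS[OF i]]) (auto simp: aa_def)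
  then show ?thesis using tail_exp by (rule order.trans)
qed

end

definition qq :: "nat \<Rightarrow> real" where "qq n = 256 * exp (- (real n + 16))"

lemma exp16: "(512::real) \<le> exp 16"
proof -
  have "(2::real) \<le> exp 1" using exp_ge_add_one_self[of 1] by simp
  then have "(2::real)^16 \<le> (exp 1)^16" by (intro power_mono) auto
  also have "(exp 1)^16 = exp (real 16 * 1)" by (rule exp_of_nat_mult[symmetric])
  finally show ?thesis by simp
qed

lemma qq_pos: "qq n > 0" by (simp add: qq_def)

lemma qq_half: "qq n \<le> 1/2"
proof -
  have "exp (16::real) \<le> exp (real n + 16)" by simp
  then have e: "512 \<le> exp (real n + 16)" using exp16 by linarith
  have "qq n = 256 / exp (real n + 16)" unfolding qq_def exp_minus[of "real n + 16"] by (simp add: divide_inverse)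
  also have "\<dots> \<le> 256 / 512" using e by (intro divide_left_mono) auto
  finally show ?thesis by simp
qed

lemma pow_exp_q: "256 ^ L * exp (- ((real n + 16) * real L)) = qq n ^ L"
proof -
  have a: "exp (real L * (- (real n + 16))) = exp (- (real n + 16)) ^ L" by (rule exp_of_nat_mult)
  have b: "- ((real n + 16) * real L) = real L * (- (real n + 16))" by (simp add: algebra_simps)
  have "exp (- ((real n + 16) * real L)) = exp (- (real n + 16)) ^ L" unfolding b a ..
  then show ?thesis by (simp add: qq_def power_mult_distrib)
qed

context setting begin

lemma prob_BadL: "prob (BadL n k) \<le> 4 * qq n ^ Suc k"
proof -
  define E where "E = 2 * exp (- ((real n + 16) * real (Suc k)))"
  have "prob (BadL n k) \<le> (\<Sum>i<16 ^ Suc k. prob (\<Union>j\<in>{..<16 ^ Suc k}. Bt n k i j \<union> Bs n k i j))"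
    unfolding BadL_def by (rule measure_UNION_le) auto
  also have "\<dots> \<le> (\<Sum>i<16 ^ Suc k. \<Sum>j<16 ^ Suc k. prob (Bt n k i j \<union> Bs n k i j))"
    by (intro sum_mono measure_UNION_le) auto
  also have "\<dots> \<le> (\<Sum>i<(16::nat) ^ Suc k. \<Sum>j<(16::nat) ^ Suc k. E + E)"
  proof (intro sum_mono)
    fix i j :: nat assume i: "i \<in> {..<16 ^ Suc k}"
    have "prob (Bt n k i j \<union> Bs n k i j) \<le> prob (Bt n k i j) + prob (Bs n k i j)"
      by (rule measure_Un_le) auto
    also have "\<dots> \<le> E + E" unfolding E_def using prob_Bt prob_Bs i by (intro add_mono) auto
    finally show "prob (Bt n k i j \<union> Bs n k i j) \<le> E + E" .
  qed
  also have "\<dots> = real (16 ^ Suc k) * real (16 ^ Suc k) * (E + E)" by simp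
  also have "\<dots> = 4 * (256 ^ Suc k * exp (- ((real n + 16) * real (Suc k))))"
    unfolding E_def by (simp add: power_mult_distrib[symmetric])
  also have "\<dots> = 4 * qq n ^ Suc k" by (simp only: pow_exp_q)
  finally show ?thesis .
qed

lemma prob_Bad: "prob (Bad n) \<le> 8 * qq n"
proof -
  have q0: "0 \<le> qq n" "qq n < 1" using qq_pos[of n] qq_half[of n] by auto
  have sq: "summable (\<lambda>k. 4 * qq n ^ Suc k)"
    using q0 by (intro summable_mult summable_geometric_iff[THEN iffD2] ) (simp_all add: summable_geometric_iff)
  have sm: "summable (\<lambda>k. measure M (BadL n k))"
    by (rule summable_comparison_test'[OF sq, of 0]) (use prob_BadL in auto)
  have "emeasure M (Bad n) \<le> (\<Sum>k. measure M (BadL n k))"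
    unfolding Bad_def by (rule emeasure_union_summable(2)[OF _ _ sm]) (auto simp: emeasure_eq_measure)
  then have "prob (Bad n) \<le> (\<Sum>k. measure M (BadL n k))"
    by (simp add: emeasure_eq_measure suminf_nonneg[OF sm] ennreal_le_iff)
  also have "\<dots> \<le> (\<Sum>k. 4 * qq n ^ Suc k)"
    by (rule suminf_le[OF _ sm sq]) (rule prob_BadL)
  also have "(\<Sum>k. 4 * qq n ^ Suc k) = 4 * qq n * (\<Sum>k. qq n ^ k)"
    using q0 by (subst suminf_mult[symmetric]) (auto simp: algebra_simps)
  also have "\<dots> = 4 * qq n / (1 - qq n)" using q0 by (simp add: suminf_geometric)
  also have "\<dots> \<le> 8 * qq n"
    using qq_half[of n] qq_pos[of n] by (simp add: divide_simps)
  finally show ?thesis .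
qed

lemma AE_good: "AE \<omega> in M. eventually (\<lambda>n. \<omega> \<in> space M - Bad n) sequentially"
proof (rule borel_cantelli_AE1)
  show "\<And>n. Bad n \<in> sets M" by simp
  show "\<And>n. emeasure M (Bad n) < \<infinity>" by (simp add: emeasure_eq_measure)
  have "summable (\<lambda>n. 2048 * exp (- 16) * (exp (-1)) ^ n :: real)"
    by (intro summable_mult summable_geometric) simp
  then show "summable (\<lambda>n. measure M (Bad n))"
  proof (rule summable_comparison_test'[of _ 0])
    fix n :: nat
    have "norm (measure M (Bad n)) = prob (Bad n)" by simp
    also have "\<dots> \<le> 8 * qq n" by (rule prob_Bad)
    also have "\<dots> = 2048 * exp (- 16) * (exp (-1)) ^ n"
    proof -
      have a: "exp (real n * (-1)) = exp (-1::real) ^ n" by (rule exp_of_nat_mult)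
      have "exp (- (real n + 16)) = exp (- 16) * exp (real n * (-1))" by (simp add: exp_add[symmetric])
      then show ?thesis unfolding qq_def a by simp
    qed
    finally show "norm (measure M (Bad n)) \<le> 2048 * exp (- 16) * (exp (-1)) ^ n" .
  qed
qed

end

lemma sum34: "(\<Sum>k<K. (3/4::real) ^ Suc k) \<le> 3"
proof -
  have "(\<Sum>k<K. (3/4::real) ^ Suc k) = (3/4) * (\<Sum>k<K. (3/4::real) ^ k)"
    by (simp add: sum_distrib_left)
  also have "(\<Sum>k<K. (3/4::real) ^ k) = (1 - (3/4)^K) / (1 - 3/4)" by (simp add: sum_gp_strict)
  also have "(3/4::real) * ((1 - (3/4)^K) / (1 - 3/4)) \<le> 3"
  proof -
    have "(0::real) \<le> (3/4)^K" by simp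
    then show ?thesis by simp
  qed
  finally show ?thesis .
qed

lemma sum_aa: "(\<Sum>k<K. 2 * aa n (Suc k)) \<le> 6 * sqrt (32 * QQ n * (real n + 16))"
proof -
  define c where "c = sqrt (32 * QQ n * (real n + 16))"
  have c0: "c \<ge> 0" using QQ_pos[of n] by (simp add: c_def)
  have "(\<Sum>k<K. 2 * aa n (Suc k)) = 2 * c * (\<Sum>k<K. (3/4::real) ^ Suc k)"
    by (simp add: aa_def c_def sum_distrib_left mult.assoc)
  also have "\<dots> \<le> 2 * c * 3" using c0 sum34[of K] by (intro mult_left_mono) auto
  finally show ?thesis by (simp add: c_def)
qed

context setting begin

lemma good_grid:
  assumes \<omega>: "\<omega> \<in> space M" and good: "\<omega> \<notin> Bad n"
  shows "i < 16 ^ K \<Longrightarrow> j < 16 ^ K \<Longrightarrow>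
     \<bar>g (gt n K i) (gx K j) \<omega> - g (TT n) 0 \<omega>\<bar> \<le> (\<Sum>k<K. 2 * aa n (Suc k))"
proof (induction K arbitrary: i j)
  case 0
  then show ?case by (simp add: gt_def gx_def)
next
  case (Suc K)
  have nb: "\<omega> \<notin> BadL n K" using good by (simp add: Bad_def)
  have nt: "\<omega> \<notin> Bt n K i j" and ns: "\<omega> \<notin> Bs n K i j"
    using nb Suc.prems by (auto simp: BadL_def)
  have m1: "\<bar>g (gt n (Suc K) i) (gx (Suc K) j) \<omega> - g (gt n K (i div 16)) (gx (Suc K) j) \<omega>\<bar> \<le> aa n (Suc K)"
    using nt \<omega> by (simp add: Bt_def)
  have m2: "\<bar>g (gt n K (i div 16)) (gx (Suc K) j) \<omega> - g (gt n K (i div 16)) (gx K (j div 16)) \<omega>\<bar> \<le> aa n (Suc K)"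
    using ns \<omega> by (simp add: Bs_def)
  have i': "i div 16 < 16 ^ K" and j': "j div 16 < 16 ^ K"
    using Suc.prems by (simp_all add: less_mult_imp_div_less mult.commute)
  have ih: "\<bar>g (gt n K (i div 16)) (gx K (j div 16)) \<omega> - g (TT n) 0 \<omega>\<bar> \<le> (\<Sum>k<K. 2 * aa n (Suc k))"
    by (rule Suc.IH[OF i' j'])
  have "\<bar>g (gt n (Suc K) i) (gx (Suc K) j) \<omega> - g (TT n) 0 \<omega>\<bar>
     \<le> aa n (Suc K) + aa n (Suc K) + (\<Sum>k<K. 2 * aa n (Suc k))"
    using m1 m2 ih by linarith
  then show ?case by simp
qed

end

definition ap :: "nat \<Rightarrow> real \<Rightarrow> nat" where
  "ap K y = min (nat \<lfloor>y * 16 ^ K\<rfloor>) (16 ^ K - 1)"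

lemma ap_lt: "ap K y < 16 ^ K"
proof -
  have "(1::nat) \<le> 16 ^ K" by simp
  then show ?thesis unfolding ap_def by linarith
qed

lemma ap_bounds:
  assumes y: "0 \<le> y" "y \<le> 1"
  shows "y - 1 / 16 ^ K \<le> real (ap K y) / 16 ^ K" and "real (ap K y) / 16 ^ K \<le> y"
proof -
  define F where "F = \<lfloor>y * 16 ^ K\<rfloor>"
  have F0: "F \<ge> 0" using y by (simp add: F_def)
  have F1: "real_of_int F \<le> y * 16 ^ K" "y * 16 ^ K < real_of_int F + 1"
    unfolding F_def by linarith+
  have rn: "real (nat F) = real_of_int F" using F0 by simp
  have p16: "(1::nat) \<le> 16 ^ K" by simp
  have r16: "real (16 ^ K - 1 :: nat) = 16 ^ K - 1" using p16 by (simp add: of_nat_diff)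
  have pos: "(0::real) < 16 ^ K" by simp
  have "y - 1 / 16 ^ K \<le> real (ap K y) / 16 ^ K \<and> real (ap K y) / 16 ^ K \<le> y"
  proof (cases "nat F \<le> 16 ^ K - 1")
    case True
    then have "ap K y = nat F" by (simp add: ap_def F_def)
    then show ?thesis using F1 rn pos by (simp add: divide_simps)
  next
    case False
    then have a: "ap K y = 16 ^ K - 1" by (simp add: ap_def F_def)
    have "real (16 ^ K - 1 :: nat) < real (nat F)" using False by linarith
    then have "16 ^ K - 1 < real_of_int F" using r16 rn by simp
    then show ?thesis unfolding a r16 using F1 pos y by (simp add: divide_simps)
  qed
  then show "y - 1 / 16 ^ K \<le> real (ap K y) / 16 ^ K" and "real (ap K y) / 16 ^ K \<le> y" by auto
qed

lemma ap_tendsto: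
  assumes y: "0 \<le> y" "y \<le> 1"
  shows "(\<lambda>K. real (ap K y) / 16 ^ K) \<longlonglongrightarrow> y"
proof (rule tendsto_sandwich[of "\<lambda>K. y - 1 / 16 ^ K" _ _ "\<lambda>K. y"])
  show "\<forall>\<^sub>F K in sequentially. y - 1 / 16 ^ K \<le> real (ap K y) / 16 ^ K" using ap_bounds(1)[OF y] by simp
  show "\<forall>\<^sub>F K in sequentially. real (ap K y) / 16 ^ K \<le> y" using ap_bounds(2)[OF y] by simp
  show "(\<lambda>K. y) \<longlonglongrightarrow> y" by simp
  have "(\<lambda>K. (1/16::real) ^ K) \<longlonglongrightarrow> 0" by (rule LIMSEQ_realpow_zero) auto
  then have "(\<lambda>K. 1 / 16 ^ K :: real) \<longlonglongrightarrow> 0" by (simp add: power_one_over)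
  then show "(\<lambda>K. y - 1 / 16 ^ K) \<longlonglongrightarrow> y" using tendsto_diff[of "\<lambda>K. y" y sequentially] by force
qed

lemma grid_extend:
  fixes G :: "real \<times> real \<Rightarrow> real"
  assumes cont: "continuous_on ({0..} \<times> UNIV) G" and T: "T \<ge> 0"
    and bound: "\<And>K i j. i < 16 ^ K \<Longrightarrow> j < 16 ^ K \<Longrightarrow> \<bar>G (T + real i / 16 ^ K, real j / 16 ^ K) - G (T, 0)\<bar> \<le> C"
    and h: "0 \<le> h" "h \<le> 1" and x: "0 \<le> x" "x \<le> 1"
  shows "\<bar>G (T + h, x) - G (T, 0)\<bar> \<le> C"
proof -
  define p where "p K = (T + real (ap K h) / 16 ^ K, real (ap K x) / 16 ^ K)" for K
  have pl: "p \<longlonglongrightarrow> (T + h, x)"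
    unfolding p_def by (intro tendsto_Pair tendsto_add tendsto_const ap_tendsto h x)
  have Gl: "(\<lambda>K. G (p K)) \<longlonglongrightarrow> G (T + h, x)"
    by (rule continuous_on_tendsto_compose[OF cont pl]) (use T h in \<open>auto simp: p_def\<close>)
  have "(\<lambda>K. \<bar>G (p K) - G (T, 0)\<bar>) \<longlonglongrightarrow> \<bar>G (T + h, x) - G (T, 0)\<bar>"
    by (intro tendsto_rabs tendsto_diff Gl tendsto_const)
  moreover have "\<forall>\<^sub>F K in sequentially. \<bar>G (p K) - G (T, 0)\<bar> \<le> C"
    unfolding p_def using bound[OF ap_lt ap_lt] by simp
  ultimately show ?thesis by (rule tendsto_upperbound) simp
qed

lemma ss_eq: "ss n = QQ n / sqrt (sqrt (2 * pi))"
  using QQ_pos[of n] by (simp add: ss_def vv_def real_sqrt_divide)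

lemma ell_lim: "filterlim (\<lambda>n. ss n / 2 - 6 * sqrt (32 * QQ n * (real n + 16))) at_top sequentially"
proof -
  define \<alpha> where "\<alpha> = 1 / (2 * sqrt (sqrt (2 * pi)))"
  have \<alpha>: "\<alpha> > 0" by (simp add: \<alpha>_def)
  have QQe: "QQ n = 2 * 2 ^ n" for n by (simp add: QQ_def)
  have l1: "(\<lambda>n. real n / 2 ^ n :: real) \<longlonglongrightarrow> 0" by (rule lim_n_over_pown) simp
  have l2: "(\<lambda>n. 16 / 2 ^ n :: real) \<longlonglongrightarrow> 0"
  proof -
    have "(\<lambda>n. (1/2::real) ^ n) \<longlonglongrightarrow> 0" by (rule LIMSEQ_realpow_zero) auto
    then have "(\<lambda>n. 16 * (1/2::real) ^ n) \<longlonglongrightarrow> 16 * 0" by (intro tendsto_mult tendsto_const)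
    then show ?thesis by (simp add: power_one_over)
  qed
  have l3: "(\<lambda>n. 32 * (real n + 16) / QQ n) \<longlonglongrightarrow> 16 * (0 + 0)"
  proof -
    have "(\<lambda>n. 16 * (real n / 2 ^ n + 16 / 2 ^ n) :: real) \<longlonglongrightarrow> 16 * (0 + 0)"
      by (intro tendsto_mult tendsto_add l1 l2 tendsto_const)
    moreover have "(\<lambda>n. 16 * (real n / 2 ^ n + 16 / 2 ^ n) :: real) = (\<lambda>n. 32 * (real n + 16) / QQ n)"
      by (rule ext) (simp add: QQe field_simps)
    ultimately show ?thesis by simp
  qed
  have l4: "(\<lambda>n. \<alpha> - 6 * sqrt (32 * (real n + 16) / QQ n)) \<longlonglongrightarrow> \<alpha> - 6 * sqrt (16 * (0 + 0))"
    by (intro tendsto_diff tendsto_mult tendsto_real_sqrt l3 tendsto_const)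
  have QQlim: "filterlim QQ at_top sequentially"
  proof (rule filterlim_at_top_mono[OF filterlim_real_sequentially])
    show "\<forall>\<^sub>F n in sequentially. real n \<le> QQ n"
    proof (rule always_eventually, rule allI)
      fix n :: nat
      have "n < 2 ^ n" by (rule less_exp)
      then have "real n \<le> 2 ^ n" by (metis less_imp_le of_nat_le_iff of_nat_numeral of_nat_power)
      moreover have "(0::real) \<le> 2 ^ n" by simp
      ultimately show "real n \<le> QQ n" unfolding QQe by linarith
    qed
  qed
  have "filterlim (\<lambda>n. (\<alpha> - 6 * sqrt (32 * (real n + 16) / QQ n)) * QQ n) at_top sequentially"
    by (rule filterlim_tendsto_pos_mult_at_top[OF l4 _ QQlim]) (simp add: \<alpha>)
  moreover have "(\<lambda>n. (\<alpha> - 6 * sqrt (32 * (real n + 16) / QQ n)) * QQ n)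
      = (\<lambda>n. ss n / 2 - 6 * sqrt (32 * QQ n * (real n + 16)))"
  proof (rule ext)
    fix n
    have Q: "QQ n > 0" by (rule QQ_pos)
    have "sqrt (32 * QQ n * (real n + 16)) = sqrt ((QQ n)\<^sup>2 * (32 * (real n + 16) / QQ n))"
      using Q by (simp add: power2_eq_square field_simps)
    also have "\<dots> = sqrt ((QQ n)\<^sup>2) * sqrt (32 * (real n + 16) / QQ n)"
      by (rule real_sqrt_mult)
    also have "\<dots> = QQ n * sqrt (32 * (real n + 16) / QQ n)"
      using Q by simp
    finally have e: "sqrt (32 * QQ n * (real n + 16)) = QQ n * sqrt (32 * (real n + 16) / QQ n)" .
    show "(\<alpha> - 6 * sqrt (32 * (real n + 16) / QQ n)) * QQ n = ss n / 2 - 6 * sqrt (32 * QQ n * (real n + 16))"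
      unfolding e ss_eq \<alpha>_def by (simp add: algebra_simps)
  qed
  ultimately show ?thesis by simp
qed

lemma TT_ge: "real m \<le> TT m"
proof -
  have "m < 2 ^ m" by (rule less_exp)
  then have a: "real m \<le> 2 ^ m" by (metis less_imp_le of_nat_le_iff of_nat_numeral of_nat_power)
  have b: "(2::real) ^ m \<le> QQ m" by (simp add: QQ_def)
  have "QQ m \<le> QQ m ^ 4"
  proof -
    have "QQ m ^ 1 \<le> QQ m ^ 4" using QQ_ge2[of m] by (intro power_increasing) auto
    then show ?thesis by simp
  qed
  then show ?thesis using a b unfolding TT_def by linarith
qed

theorem proposition2p4:
  fixes M :: "'a measure"
    and W :: "(real \<times> real \<Rightarrow> real) \<Rightarrow> 'a \<Rightarrow> real"
    and g :: "real \<Rightarrow> real \<Rightarrow> 'a \<Rightarrow> real"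
  assumes "white_noise_integral M W"
    and "\<And>t x. t \<ge> 0 \<Longrightarrow> g t x \<in> borel_measurable M"
    and "\<And>t x. t \<ge> 0 \<Longrightarrow> AE \<omega> in M. g t x \<omega> = W (heat_integrand t x) \<omega>"
    and "AE \<omega> in M. continuous_on ({0..} \<times> UNIV) (\<lambda>(t, x). g t x \<omega>)"
  shows "AE \<omega> in M. \<exists>tn :: nat \<Rightarrow> real. filterlim tn at_top sequentially \<and>
           filterlim (\<lambda>n. INF p \<in> {0..1} \<times> {0..1}. g (tn n + fst p) (snd p) \<omega>)
             at_top sequentially"
proof -
  interpret S: setting M W g
    by unfold_locales (use assms in auto)
  define ell where "ell n = ss n / 2 - 6 * sqrt (32 * QQ n * (real n + 16))" for n
  have AE1: "AE \<omega> in M. eventually (\<lambda>n. \<omega> \<in> space M - S.Bad n) sequentially"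
    by (rule S.AE_good)
  have AE2: "AE \<omega> in M. \<forall>K. \<omega> \<notin> {\<omega> \<in> space M. \<forall>n\<ge>K. g (TT n) 0 \<omega> / ss n \<le> 1/2}"
  proof (subst AE_all_countable, rule allI)
    fix K :: nat
    have sets: "{\<omega> \<in> space M. \<forall>n\<ge>K. g (TT n) 0 \<omega> / ss n \<le> 1/2} \<in> sets M" by measurable
    have "emeasure M {\<omega> \<in> space M. \<forall>n\<ge>K. g (TT n) 0 \<omega> / ss n \<le> 1/2} = 0"
      using S.EK_null[of K] by (simp add: S.emeasure_eq_measure)
    then have "{\<omega> \<in> space M. \<forall>n\<ge>K. g (TT n) 0 \<omega> / ss n \<le> 1/2} \<in> null_sets M"
      using sets by auto
    then show "AE \<omega> in M. \<omega> \<notin> {\<omega> \<in> space M. \<forall>n\<ge>K. g (TT n) 0 \<omega> / ss n \<le> 1/2}"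
      by (rule AE_not_in)
  qed
  show ?thesis
    using AE1 AE2 assms(4) AE_space
  proof eventually_elim
    case (elim \<omega>)
    note H1 = elim(1) and H2 = elim(2) and cont = elim(3) and \<omega> = elim(4)
    obtain N where N: "\<And>n. n \<ge> N \<Longrightarrow> \<omega> \<notin> S.Bad n"
      using H1 unfolding eventually_sequentially by auto
    define SS where "SS = {n. \<omega> \<notin> S.Bad n \<and> g (TT n) 0 \<omega> / ss n > 1/2}"
    have inf: "infinite SS"
      unfolding infinite_nat_iff_unbounded_le
    proof
      fix m
      have "\<not> (\<forall>n\<ge>max m N. g (TT n) 0 \<omega> / ss n \<le> 1/2)" using H2 \<omega> by blast
      then obtain n where n: "n \<ge> max m N" "g (TT n) 0 \<omega> / ss n > 1/2" by (auto simp: not_le)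
      then show "\<exists>n\<ge>m. n \<in> SS" using N unfolding SS_def by auto
    qed
    from infinite_enumerate[OF inf] obtain r :: "nat \<Rightarrow> nat" where r0: "strict_mono r" "\<forall>k. r k \<in> SS" by blast
    have r: "strict_mono r" "\<And>k. r k \<in> SS" using r0 by auto
    have key: "ell n \<le> g (TT n + fst p) (snd p) \<omega>" if n: "n \<in> SS" and p: "p \<in> {0..1} \<times> {0..1}" for n p
    proof -
      obtain h x where hx: "p = (h, x)" "0 \<le> h" "h \<le> 1" "0 \<le> x" "x \<le> 1" using p by auto
      have good: "\<omega> \<notin> S.Bad n" and big: "g (TT n) 0 \<omega> / ss n > 1/2" using n by (auto simp: SS_def)
      have "\<bar>(\<lambda>(t, x). g t x \<omega>) (TT n + h, x) - (\<lambda>(t, x). g t x \<omega>) (TT n, 0)\<bar>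
          \<le> 6 * sqrt (32 * QQ n * (real n + 16))"
      proof (rule grid_extend[OF cont TT_nonneg _ hx(2-5)])
        fix K i j :: nat assume i: "i < 16 ^ K" and j: "j < 16 ^ K"
        have "\<bar>g (gt n K i) (gx K j) \<omega> - g (TT n) 0 \<omega>\<bar> \<le> (\<Sum>k<K. 2 * aa n (Suc k))"
          by (rule S.good_grid[OF \<omega> good i j])
        also have "\<dots> \<le> 6 * sqrt (32 * QQ n * (real n + 16))" by (rule sum_aa)
        finally show "\<bar>(\<lambda>(t, x). g t x \<omega>) (TT n + real i / 16 ^ K, real j / 16 ^ K) - (\<lambda>(t, x). g t x \<omega>) (TT n, 0)\<bar>
          \<le> 6 * sqrt (32 * QQ n * (real n + 16))" by (simp add: gt_def gx_def)
      qed
      then have a: "g (TT n) 0 \<omega> - 6 * sqrt (32 * QQ n * (real n + 16)) \<le> g (TT n + h) x \<omega>" by simp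
      have "ss n / 2 < g (TT n) 0 \<omega>" using big ss_pos[of n] by (simp add: divide_simps)
      then show ?thesis using a hx(1) unfolding ell_def by simp
    qed
    have INFb: "ell (r k) \<le> (INF p \<in> {0..1} \<times> {0..1}. g (TT (r k) + fst p) (snd p) \<omega>)" for k
      by (rule cINF_greatest) (use key r(2) in auto)
    show ?case
    proof (intro exI conjI)
      show "filterlim (\<lambda>k. TT (r k)) at_top sequentially"
      proof (rule filterlim_at_top_mono[OF filterlim_real_sequentially])
        show "\<forall>\<^sub>F k in sequentially. real k \<le> TT (r k)"
        proof (rule always_eventually, rule allI)
          fix k
          have "real k \<le> real (r k)" using seq_suble[OF r(1)] by simp
          also have "\<dots> \<le> TT (r k)" by (rule TT_ge)
          finally show "real k \<le> TT (r k)" .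
        qed
      qed
      have "filterlim (\<lambda>k. ell (r k)) at_top sequentially"
        using filterlim_compose[OF ell_lim filterlim_subseq[OF r(1)]] unfolding ell_def by simp
      then show "filterlim (\<lambda>k. INF p \<in> {0..1} \<times> {0..1}. g (TT (r k) + fst p) (snd p) \<omega>) at_top sequentially"
        by (rule filterlim_at_top_mono) (use INFb in auto)
    qed
  qed
qed

end
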